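(* Let $\langle X\mid R\rangle$ be an extra-confluent $N$-homogeneous presentation. Let $n\geq2$ and $m\geq l_N(n+2)$ be integers, and let $T_{n,m}=S^{(m)}_{m-l_N(n+2)+1}\wedge\cdots\wedge S^{(m)}_{m-l_N(n+1)}$. Then $T_{n,m}\vee F_2^{n-1,m}=F_2^{n,m}$.
   Context: $\mathbb{K}$ is a field, $N\geq2$, $X^{(m)}$ words of length $m$, $V=\mathbb{K}X$, $V^{\otimes m}=\mathbb{K}X^{(m)}$. $R\subset V^{\otimes N}$, $\overline R=\mathrm{span}(R)$. $X$ is totally ordered, $X^{(m)}$ lexicographically ordered, $\mathrm{lm}(f)$ greatest word in $f\neq0$. Conventions: leading coefficients in $R$ are $1$; a word is a normal form if it has no factor $\mathrm{lm}(f)$, $f\in R$; the presentation is reduced. $S\in\mathrm{End}(V^{\otimes N})$: $S(\mathrm{lm}(f))=\mathrm{lm}(f)-f$ ($f\in R$), $S(w)=w$ otherwise. $\langle t,s\rangle^k=\cdots sts$ ($k$ factors). Side-confluent: for each $1\leq m\leq N-1$ some $k$ gives $\langle\mathrm{id}_{V^{\otimes m}}\otimes S,S\otimes\mathrm{id}_{V^{\otimes m}}\rangle^k=\langle S\otimes\mathrm{id}_{V^{\otimes m}},\mathrm{id}_{V^{\otimes m}}\otimes S\rangle^k$. Extra-confluent: side-confluent, $X$ finite, and $(V^{\otimes n}\otimes\overline R)\cap(\overline R\otimes V^{\otimes n})\subset V^{\otimes n-1}\otimes\overline R\otimes V$ for $2\leq n\leq N-1$. $l_N(2k)=kN$, $l_N(2k+1)=kN+1$;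 $J_1=V$, $J_2=\overline R$, $J_n=\bigcap_{i=0}^{l_N(n)-N}V^{\otimes i}\otimes\overline R\otimes V^{\otimes l_N(n)-N-i}$ ($n\geq3$). $S_i^{(m)}=\mathrm{id}_{V^{\otimes i}}\otimes S\otimes\mathrm{id}_{V^{\otimes m-N-i}}$ for $0\leq i\leq m-N$. A reduction operator relatively to $X^{(m)}$ is a linear projector $T$ of $V^{\otimes m}$ with each $T(w)$ equal to $w$ or a combination of words $<w$; the unique one with kernel $W$ is $\theta_{X^{(m)}}^{-1}(W)$; $T_1\wedge T_2=\theta^{-1}(\ker T_1+\ker T_2)$, $T_1\vee T_2=\theta^{-1}(\ker T_1\cap\ker T_2)$ (associative). For $m\geq l_N(n)$: $F_2^{n,m}=\mathrm{id}_{V^{\otimes m}}$ if $m<l_N(n+1)$, otherwise $F_2^{n,m}=\theta_{X^{(m)}}^{-1}(V^{\otimes m-l_N(n+1)}\otimes J_{n+1})$. *)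

theory Defs
  imports Main
begin

definition words :: "'x set \<Rightarrow> nat \<Rightarrow> 'x list set" where
  "words X m = {w. set w \<subseteq> X \<and> length w = m}"

definition lex_less :: "'x::linorder list \<Rightarrow> 'x list \<Rightarrow> bool" where
  "lex_less u v \<longleftrightarrow> (u, v) \<in> lexord {(a, b). a < b}"

(* Vectors of V^{\<otimes>m} = K X^{(m)}: coefficient functions supported on X^{(m)}. *)
definition vecs :: "'x set \<Rightarrow> nat \<Rightarrow> ('x list \<Rightarrow> 'k::field) set" where
  "vecs X m = {v. \<forall>w. w \<notin> words X m \<longrightarrow> v w = 0}"

definition word_vec :: "'x list \<Rightarrow> ('x list \<Rightarrow> 'k::field)" where
  "word_vec w = (\<lambda>u. if u = w then 1 else 0)"

definition lin_span :: "('x list \<Rightarrow> 'k::field) set \<Rightarrow> ('x list \<Rightarrow> 'k) set" where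
  "lin_span S = {v. \<exists>F c. finite F \<and> F \<subseteq> S \<and> v = (\<lambda>w. \<Sum>f\<in>F. c f * f w)}"

definition ssum :: "('x list \<Rightarrow> 'k::field) set \<Rightarrow> ('x list \<Rightarrow> 'k) set \<Rightarrow> ('x list \<Rightarrow> 'k) set" where
  "ssum A B = {v. \<exists>a\<in>A. \<exists>b\<in>B. v = (\<lambda>w. a w + b w)}"

(* Elementary tensor u \<otimes> g \<otimes> u' for words u, u' and a vector g. *)
definition pad :: "'x list \<Rightarrow> ('x list \<Rightarrow> 'k::field) \<Rightarrow> 'x list \<Rightarrow> ('x list \<Rightarrow> 'k)" where
  "pad a g b = (\<lambda>x. if length a + length b \<le> length x \<and> take (length a) x = a
                       \<and> drop (length x - length b) x = b
                   then g (drop (length a) (take (length x - length b) x)) else 0)"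

(* V^{\<otimes>i} \<otimes> W \<otimes> V^{\<otimes>j} *)
definition tens :: "'x set \<Rightarrow> nat \<Rightarrow> ('x list \<Rightarrow> 'k::field) set \<Rightarrow> nat \<Rightarrow> ('x list \<Rightarrow> 'k) set" where
  "tens X i W j = lin_span {pad a g b | a g b. a \<in> words X i \<and> g \<in> W \<and> b \<in> words X j}"

(* Endomorphisms of V^{\<otimes>m} are represented by their matrices M w' w
   (coefficient of w' in the image of w), normalised to 0 outside X^{(m)}. *)
definition mat_ok :: "'x set \<Rightarrow> nat \<Rightarrow> ('x list \<Rightarrow> 'x list \<Rightarrow> 'k::field) \<Rightarrow> bool" where
  "mat_ok X m M \<longleftrightarrow> (\<forall>w' w. (w' \<notin> words X m \<or> w \<notin> words X m) \<longrightarrow> M w' w = 0)"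

definition mapply :: "'x set \<Rightarrow> nat \<Rightarrow> ('x list \<Rightarrow> 'x list \<Rightarrow> 'k::field) \<Rightarrow> ('x list \<Rightarrow> 'k) \<Rightarrow> ('x list \<Rightarrow> 'k)" where
  "mapply X m M v = (\<lambda>w'. if w' \<in> words X m then \<Sum>w\<in>words X m. M w' w * v w else 0)"

definition mcomp :: "'x set \<Rightarrow> nat \<Rightarrow> ('x list \<Rightarrow> 'x list \<Rightarrow> 'k::field) \<Rightarrow> ('x list \<Rightarrow> 'x list \<Rightarrow> 'k) \<Rightarrow> ('x list \<Rightarrow> 'x list \<Rightarrow> 'k)" where
  "mcomp X m A B = (\<lambda>w' w. if w' \<in> words X m \<and> w \<in> words X m
                            then \<Sum>u\<in>words X m. A w' u * B u w else 0)"

definition midentity :: "'x set \<Rightarrow> nat \<Rightarrow> ('x list \<Rightarrow> 'x list \<Rightarrow> 'k::field)" where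
  "midentity X m = (\<lambda>w' w. if w' \<in> words X m \<and> w = w' then 1 else 0)"

definition ker :: "'x set \<Rightarrow> nat \<Rightarrow> ('x list \<Rightarrow> 'x list \<Rightarrow> 'k::field) \<Rightarrow> ('x list \<Rightarrow> 'k) set" where
  "ker X m M = {v \<in> vecs X m. mapply X m M v = (\<lambda>_. 0)}"

(* id_{V^{\<otimes>a}} \<otimes> A \<otimes> id_{V^{\<otimes>b}}, for A an endomorphism of V^{\<otimes>k} *)
definition opmid :: "'x set \<Rightarrow> nat \<Rightarrow> nat \<Rightarrow> ('x list \<Rightarrow> 'x list \<Rightarrow> 'k::field) \<Rightarrow> nat \<Rightarrow> ('x list \<Rightarrow> 'x list \<Rightarrow> 'k)" where
  "opmid X k a A b = (\<lambda>x y. if x \<in> words X (a + k + b) \<and> y \<in> words X (a + k + b)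
                              \<and> take a x = take a y \<and> drop (a + k) x = drop (a + k) y
                           then A (take k (drop a x)) (take k (drop a y)) else 0)"

(* \<langle>t,s\<rangle>^k = ... s t s  (k factors, s applied first) *)
fun braid :: "'x set \<Rightarrow> nat \<Rightarrow> ('x list \<Rightarrow> 'x list \<Rightarrow> 'k::field) \<Rightarrow> ('x list \<Rightarrow> 'x list \<Rightarrow> 'k) \<Rightarrow> nat \<Rightarrow> ('x list \<Rightarrow> 'x list \<Rightarrow> 'k)" where
  "braid X m t s 0 = midentity X m"
| "braid X m t s (Suc k) = mcomp X m (if even k then s else t) (braid X m t s k)"

definition reduction_op :: "'x::linorder set \<Rightarrow> nat \<Rightarrow> ('x list \<Rightarrow> 'x list \<Rightarrow> 'k::field) \<Rightarrow> bool" where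
  "reduction_op X m T \<longleftrightarrow> mat_ok X m T \<and> mcomp X m T T = T \<and>
     (\<forall>w\<in>words X m. (\<lambda>w'. T w' w) = word_vec w \<or>
                     (\<forall>w'\<in>words X m. T w' w \<noteq> 0 \<longrightarrow> lex_less w' w))"

definition theta_inv :: "'x::linorder set \<Rightarrow> nat \<Rightarrow> ('x list \<Rightarrow> 'k::field) set \<Rightarrow> ('x list \<Rightarrow> 'x list \<Rightarrow> 'k)" where
  "theta_inv X m W = (THE T. reduction_op X m T \<and> ker X m T = W)"

definition wedge :: "'x::linorder set \<Rightarrow> nat \<Rightarrow> ('x list \<Rightarrow> 'x list \<Rightarrow> 'k::field) \<Rightarrow> ('x list \<Rightarrow> 'x list \<Rightarrow> 'k) \<Rightarrow> ('x list \<Rightarrow> 'x list \<Rightarrow> 'k)" where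
  "wedge X m T1 T2 = theta_inv X m (ssum (ker X m T1) (ker X m T2))"

definition vee :: "'x::linorder set \<Rightarrow> nat \<Rightarrow> ('x list \<Rightarrow> 'x list \<Rightarrow> 'k::field) \<Rightarrow> ('x list \<Rightarrow> 'x list \<Rightarrow> 'k) \<Rightarrow> ('x list \<Rightarrow> 'x list \<Rightarrow> 'k)" where
  "vee X m T1 T2 = theta_inv X m (ker X m T1 \<inter> ker X m T2)"

(* Iterated wedge T_1 \<and> (T_2 \<and> (... \<and> T_r)) (the operation is associative). *)
fun wedges :: "'x::linorder set \<Rightarrow> nat \<Rightarrow> ('x list \<Rightarrow> 'x list \<Rightarrow> 'k::field) list \<Rightarrow> ('x list \<Rightarrow> 'x list \<Rightarrow> 'k)" where
  "wedges X m [] = midentity X m"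
| "wedges X m [T] = T"
| "wedges X m (T # U # Ts) = wedge X m T (wedges X m (U # Ts))"

definition lm :: "'x::linorder set \<Rightarrow> nat \<Rightarrow> ('x list \<Rightarrow> 'k::field) \<Rightarrow> 'x list" where
  "lm X N f = (THE w. w \<in> words X N \<and> f w \<noteq> 0 \<and>
                 (\<forall>u\<in>words X N. f u \<noteq> 0 \<longrightarrow> u = w \<or> lex_less u w))"

definition reduced_presentation :: "'x::linorder set \<Rightarrow> nat \<Rightarrow> ('x list \<Rightarrow> 'k::field) set \<Rightarrow> bool" where
  "reduced_presentation X N R \<longleftrightarrow>
     R \<subseteq> vecs X N \<and>
     (\<forall>f\<in>R. f \<noteq> (\<lambda>_. 0) \<and> f (lm X N f) = 1) \<and>
     (\<forall>f\<in>R. \<forall>g\<in>R. lm X N f = lm X N g \<longrightarrow> f = g) \<and>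
     (\<forall>f\<in>R. \<forall>w\<in>words X N. w \<noteq> lm X N f \<and> f w \<noteq> 0 \<longrightarrow> w \<notin> lm X N ` R)"

definition Smat :: "'x::linorder set \<Rightarrow> nat \<Rightarrow> ('x list \<Rightarrow> 'k::field) set \<Rightarrow> ('x list \<Rightarrow> 'x list \<Rightarrow> 'k)" where
  "Smat X N R = (\<lambda>w' w. if w' \<in> words X N \<and> w \<in> words X N then
        (if w \<in> lm X N ` R
         then word_vec w w' - (THE f. f \<in> R \<and> lm X N f = w) w'
         else word_vec w w')
      else 0)"

(* S_i^{(m)} = id_{V^{\<otimes>i}} \<otimes> S \<otimes> id_{V^{\<otimes>m-N-i}} *)
definition Sop :: "'x::linorder set \<Rightarrow> nat \<Rightarrow> ('x list \<Rightarrow> 'k::field) set \<Rightarrow> nat \<Rightarrow> nat \<Rightarrow> ('x list \<Rightarrow> 'x list \<Rightarrow> 'k)" where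
  "Sop X N R m i = opmid X N i (Smat X N R) (m - N - i)"

definition side_confluent :: "'x::linorder set \<Rightarrow> nat \<Rightarrow> ('x list \<Rightarrow> 'k::field) set \<Rightarrow> bool" where
  "side_confluent X N R \<longleftrightarrow>
     (\<forall>m. 1 \<le> m \<and> m \<le> N - 1 \<longrightarrow>
        (\<exists>k\<ge>1. braid X (N + m) (opmid X N m (Smat X N R) 0) (opmid X N 0 (Smat X N R) m) k
              = braid X (N + m) (opmid X N 0 (Smat X N R) m) (opmid X N m (Smat X N R) 0) k))"

definition Rbar :: "'x::linorder set \<Rightarrow> ('x list \<Rightarrow> 'k::field) set \<Rightarrow> ('x list \<Rightarrow> 'k) set" where
  "Rbar X R = lin_span R"

definition extra_confluent :: "'x::linorder set \<Rightarrow> nat \<Rightarrow> ('x list \<Rightarrow> 'k::field) set \<Rightarrow> bool" where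
  "extra_confluent X N R \<longleftrightarrow> side_confluent X N R \<and> finite X \<and>
     (\<forall>n. 2 \<le> n \<and> n \<le> N - 1 \<longrightarrow>
        tens X n (Rbar X R) 0 \<inter> tens X 0 (Rbar X R) n \<subseteq> tens X (n - 1) (Rbar X R) 1)"

definition lN :: "nat \<Rightarrow> nat \<Rightarrow> nat" where
  "lN N n = (n div 2) * N + n mod 2"

definition J :: "'x::linorder set \<Rightarrow> nat \<Rightarrow> ('x list \<Rightarrow> 'k::field) set \<Rightarrow> nat \<Rightarrow> ('x list \<Rightarrow> 'k) set" where
  "J X N R n = (if n = 1 then vecs X 1 else if n = 2 then Rbar X R
               else (\<Inter>i\<in>{0..lN N n - N}. tens X i (Rbar X R) (lN N n - N - i)))"

definition F2 :: "'x::linorder set \<Rightarrow> nat \<Rightarrow> ('x list \<Rightarrow> 'k::field) set \<Rightarrow> nat \<Rightarrow> nat \<Rightarrow> ('x list \<Rightarrow> 'x list \<Rightarrow> 'k)" where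
  "F2 X N R n m = (if m < lN N (n + 1) then midentity X m
                   else theta_inv X m (tens X (m - lN N (n + 1)) (J X N R (n + 1)) 0))"

end

theory Submission
  imports Defs "HOL-Library.Function_Algebras" "HOL-Library.List_Lexorder"
begin


lemma sum_fun_apply: "(sum f A) x = sum (\<lambda>a. f a x) A"
  by (induction A rule: infinite_finite_induct) auto

lemma lex_less_iff: "lex_less u v \<longleftrightarrow> u < v"
  by (simp add: lex_less_def list_less_def)

lemma finite_words: "finite X \<Longrightarrow> finite (words X m)"
  unfolding words_def by (rule finite_lists_length_eq)

lemma words_append[simp]: "a @ b \<in> words X m \<longleftrightarrow> set a \<subseteq> X \<and> set b \<subseteq> X \<and> length a + length b = m"
  by (auto simp: words_def)

lemma in_words: "w \<in> words X m \<longleftrightarrow> set w \<subseteq> X \<and> length w = m"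
  by (simp add: words_def)

lemma less_list_append_mono:
  fixes u v :: "'x::linorder list"
  assumes "u < v" "length u = length v"
  shows "a @ u @ b < a @ v @ b"
proof -
  have "(u, v) \<in> lexord {(x, y). x < y}" using assms by (simp add: list_less_def)
  then have "(u @ b, v @ b) \<in> lexord {(x, y). x < y}"
    using assms(2) lexord_sufI by fastforce
  then have "(a @ u @ b, a @ v @ b) \<in> lexord {(x, y). x < y}"
    using lexord_append_leftI by fastforce
  then show ?thesis by (simp add: list_less_def)
qed

lemma le_list_append_mono:
  fixes u v :: "'x::linorder list"
  assumes "u \<le> v" "length u = length v"
  shows "a @ u @ b \<le> a @ v @ b"
  using assms less_list_append_mono[of u v a b] by (auto simp: order_le_less)

definition sm :: "'k::field \<Rightarrow> ('x list \<Rightarrow> 'k) \<Rightarrow> ('x list \<Rightarrow> 'k)" where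
  "sm c v = (\<lambda>w. c * v w)"

lemma sm_apply[simp]: "sm c v w = c * v w" by (simp add: sm_def)

definition supp_le :: "('x::linorder list \<Rightarrow> 'k::field) \<Rightarrow> 'x list \<Rightarrow> bool" where
  "supp_le v B \<longleftrightarrow> (\<forall>w. v w \<noteq> 0 \<longrightarrow> w \<le> B)"

definition supp_lt :: "('x::linorder list \<Rightarrow> 'k::field) \<Rightarrow> 'x list \<Rightarrow> bool" where
  "supp_lt v B \<longleftrightarrow> (\<forall>w. v w \<noteq> 0 \<longrightarrow> w < B)"

lemma supp_le_0[simp]: "supp_le 0 B" by (simp add: supp_le_def)
lemma supp_lt_0[simp]: "supp_lt 0 B" by (simp add: supp_lt_def)

lemma supp_le_add: "supp_le u B \<Longrightarrow> supp_le v B \<Longrightarrow> supp_le (u + v) B"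
  unfolding supp_le_def by (metis add.right_neutral plus_fun_apply)
lemma supp_le_diff: "supp_le u B \<Longrightarrow> supp_le v B \<Longrightarrow> supp_le (u - v) B"
  unfolding supp_le_def by (metis diff_self minus_apply)
lemma supp_le_uminus: "supp_le u B \<Longrightarrow> supp_le (- u) B"
  by (auto simp: supp_le_def)
lemma supp_le_sm: "supp_le u B \<Longrightarrow> supp_le (sm c u) B"
  by (auto simp: supp_le_def)
lemma supp_lt_add: "supp_lt u B \<Longrightarrow> supp_lt v B \<Longrightarrow> supp_lt (u + v) B"
  unfolding supp_lt_def by (metis add.right_neutral plus_fun_apply)
lemma supp_lt_diff: "supp_lt u B \<Longrightarrow> supp_lt v B \<Longrightarrow> supp_lt (u - v) B"
  unfolding supp_lt_def by (metis diff_self minus_apply)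
lemma supp_lt_sm: "supp_lt u B \<Longrightarrow> supp_lt (sm c u) B"
  by (auto simp: supp_lt_def)
lemma supp_le_lt: "supp_le u B \<Longrightarrow> u B = 0 \<Longrightarrow> supp_lt u B"
  by (auto simp: supp_le_def supp_lt_def order_le_less)
lemma supp_lt_le: "supp_lt u B \<Longrightarrow> supp_le u B"
  by (auto simp: supp_le_def supp_lt_def)
lemma supp_le_trans: "supp_le u B \<Longrightarrow> B \<le> B' \<Longrightarrow> supp_le u B'"
  by (auto simp: supp_le_def)
lemma supp_le_lt_trans: "supp_le u B \<Longrightarrow> B < B' \<Longrightarrow> supp_lt u B'"
  by (auto simp: supp_le_def supp_lt_def)

lemma supp_le_sum: "finite I \<Longrightarrow> (\<And>i. i \<in> I \<Longrightarrow> supp_le (f i) B) \<Longrightarrow> supp_le (sum f I) B"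
  by (induction I rule: finite_induct) (auto intro: supp_le_add)

lemma supp_lt_sum: "finite I \<Longrightarrow> (\<And>i. i \<in> I \<Longrightarrow> supp_lt (f i) B) \<Longrightarrow> supp_lt (sum f I) B"
  by (induction I rule: finite_induct) (auto intro: supp_lt_add)

definition subsp :: "'x set \<Rightarrow> nat \<Rightarrow> ('x list \<Rightarrow> 'k::field) set \<Rightarrow> bool" where
  "subsp X m W \<longleftrightarrow> W \<subseteq> vecs X m \<and> 0 \<in> W \<and> (\<forall>u\<in>W. \<forall>v\<in>W. u + v \<in> W) \<and> (\<forall>c. \<forall>v\<in>W. sm c v \<in> W)"

lemma subsp_vecs: "subsp X m W \<Longrightarrow> v \<in> W \<Longrightarrow> v \<in> vecs X m"
  by (auto simp: subsp_def)
lemma subsp_0: "subsp X m W \<Longrightarrow> 0 \<in> W"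
  by (auto simp: subsp_def)
lemma subsp_add: "subsp X m W \<Longrightarrow> u \<in> W \<Longrightarrow> v \<in> W \<Longrightarrow> u + v \<in> W"
  by (auto simp: subsp_def)
lemma subsp_sm: "subsp X m W \<Longrightarrow> v \<in> W \<Longrightarrow> sm c v \<in> W"
  by (auto simp: subsp_def)
lemma sm_minus1: "sm (-1) v = - v" by (auto simp: sm_def)
lemma subsp_uminus: "subsp X m W \<Longrightarrow> v \<in> W \<Longrightarrow> - v \<in> W"
  using subsp_sm[of X m W v "-1"] by (simp add: sm_minus1)
lemma subsp_diff: "subsp X m W \<Longrightarrow> u \<in> W \<Longrightarrow> v \<in> W \<Longrightarrow> u - v \<in> W"
  using subsp_add[of X m W u "- v"] subsp_uminus[of X m W v] by simp
lemma subsp_sum: assumes "subsp X m W" "finite I" "\<And>i. i \<in> I \<Longrightarrow> f i \<in> W" shows "sum f I \<in> W"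
  using assms(2,3) by (induction I rule: finite_induct) (auto intro: subsp_add[OF assms(1)] subsp_0[OF assms(1)])

lemma vecs_zero[simp]: "0 \<in> vecs X m" by (simp add: vecs_def)
lemma vecs_subsp: "subsp X m (vecs X m)"
  by (auto simp: subsp_def vecs_def)
lemma vecs_add: "u \<in> vecs X m \<Longrightarrow> v \<in> vecs X m \<Longrightarrow> u + v \<in> vecs X m"
  by (auto simp: vecs_def)
lemma vecs_diff: "u \<in> vecs X m \<Longrightarrow> v \<in> vecs X m \<Longrightarrow> u - v \<in> vecs X m"
  by (auto simp: vecs_def)
lemma vecs_uminus: "u \<in> vecs X m \<Longrightarrow> - u \<in> vecs X m"
  by (auto simp: vecs_def)
lemma vecs_sm: "u \<in> vecs X m \<Longrightarrow> sm c u \<in> vecs X m"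
  by (auto simp: vecs_def)
lemma vecs_out: "u \<in> vecs X m \<Longrightarrow> w \<notin> words X m \<Longrightarrow> u w = 0"
  by (auto simp: vecs_def)
lemma word_vec_vecs: "w \<in> words X m \<Longrightarrow> word_vec w \<in> vecs X m"
  by (auto simp: vecs_def word_vec_def)

lemma subsp_Inter:
  assumes "I \<noteq> {}" "\<And>i. i \<in> I \<Longrightarrow> subsp X m (W i)"
  shows "subsp X m (\<Inter>i\<in>I. W i)"
  unfolding subsp_def
proof (intro conjI ballI allI)
  obtain i0 where i0: "i0 \<in> I" using assms(1) by (auto simp: ex_in_conv[symmetric])
  show "(\<Inter>i\<in>I. W i) \<subseteq> vecs X m"
    using subsp_vecs[OF assms(2)[OF i0]] i0 by auto
  show "0 \<in> (\<Inter>i\<in>I. W i)" using assms(2) by (auto intro: subsp_0)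
  show "u + v \<in> (\<Inter>i\<in>I. W i)" if "u \<in> (\<Inter>i\<in>I. W i)" "v \<in> (\<Inter>i\<in>I. W i)" for u v
    using that assms(2) by (auto intro: subsp_add)
  show "sm c v \<in> (\<Inter>i\<in>I. W i)" if "v \<in> (\<Inter>i\<in>I. W i)" for c v
    using that assms(2) by (auto intro: subsp_sm)
qed

lemma subsp_Int: "subsp X m A \<Longrightarrow> subsp X m B \<Longrightarrow> subsp X m (A \<inter> B)"
  using subsp_Inter[of "{True, False}" X m "\<lambda>b. if b then A else B"] by (simp add: Int_commute)

lemma lin_span_add:
  assumes "u \<in> lin_span S" "v \<in> lin_span S"
  shows "u + v \<in> lin_span S"
proof -
  obtain F c where F: "finite F" "F \<subseteq> S" "u = (\<lambda>w. \<Sum>f\<in>F. c f * f w)"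
    using assms(1) by (auto simp: lin_span_def)
  obtain G d where G: "finite G" "G \<subseteq> S" "v = (\<lambda>w. \<Sum>f\<in>G. d f * f w)"
    using assms(2) by (auto simp: lin_span_def)
  define e where "e f = (if f \<in> F then c f else 0) + (if f \<in> G then d f else 0)" for f
  have "u + v = (\<lambda>w. \<Sum>f\<in>F \<union> G. e f * f w)"
  proof
    fix w
    have 1: "(\<Sum>f\<in>F. c f * f w) = (\<Sum>f\<in>F \<union> G. (if f \<in> F then c f else 0) * f w)"
      by (rule sum.mono_neutral_cong_left) (use F G in auto)
    have 2: "(\<Sum>f\<in>G. d f * f w) = (\<Sum>f\<in>F \<union> G. (if f \<in> G then d f else 0) * f w)"
      by (rule sum.mono_neutral_cong_left) (use F G in auto)
    show "(u + v) w = (\<Sum>f\<in>F \<union> G. e f * f w)"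
      using 1 2 F G by (simp add: e_def distrib_right sum.distrib)
  qed
  then show ?thesis unfolding lin_span_def
    by (intro CollectI exI[of _ "F \<union> G"] exI[of _ e]) (use F G in auto)
qed

lemma lin_span_sm:
  assumes "u \<in> lin_span S"
  shows "sm a u \<in> lin_span S"
proof -
  obtain F c where F: "finite F" "F \<subseteq> S" "u = (\<lambda>w. \<Sum>f\<in>F. c f * f w)"
    using assms(1) by (auto simp: lin_span_def)
  have "sm a u = (\<lambda>w. \<Sum>f\<in>F. (a * c f) * f w)"
    unfolding F(3) sm_def fun_eq_iff by (simp add: sum_distrib_left mult.assoc)
  then show ?thesis unfolding lin_span_def
    by (intro CollectI exI[of _ F] exI[of _ "\<lambda>f. a * c f"]) (use F in auto)
qed

lemma lin_span_0: "0 \<in> lin_span S"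
  unfolding lin_span_def by (rule CollectI, rule exI[of _ "{}"]) (auto simp: zero_fun_def)

lemma lin_span_base: "f \<in> S \<Longrightarrow> f \<in> lin_span S"
  unfolding lin_span_def by (rule CollectI, rule exI[of _ "{f}"], rule exI[of _ "\<lambda>_. 1"]) auto

lemma lin_span_sum: "finite I \<Longrightarrow> (\<And>i. i \<in> I \<Longrightarrow> f i \<in> lin_span S) \<Longrightarrow> sum f I \<in> lin_span S"
  by (induction I rule: finite_induct) (auto intro: lin_span_add lin_span_0)

lemma lin_span_vecs: "S \<subseteq> vecs X m \<Longrightarrow> lin_span S \<subseteq> vecs X m"
  unfolding lin_span_def vecs_def by (auto intro!: sum.neutral)

lemma lin_span_subsp: "S \<subseteq> vecs X m \<Longrightarrow> subsp X m (lin_span S)"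
  unfolding subsp_def by (simp add: lin_span_vecs lin_span_0 lin_span_add lin_span_sm)

lemma subsp_lin_span: "subsp X m W \<Longrightarrow> lin_span S \<subseteq> W \<longleftrightarrow> S \<subseteq> W"
proof
  assume "subsp X m W" "lin_span S \<subseteq> W" then show "S \<subseteq> W" using lin_span_base by auto
next
  assume W: "subsp X m W" and S: "S \<subseteq> W"
  show "lin_span S \<subseteq> W"
  proof
    fix v assume "v \<in> lin_span S"
    then obtain F c where F: "finite F" "F \<subseteq> S" "v = (\<lambda>w. \<Sum>f\<in>F. c f * f w)"
      by (auto simp: lin_span_def)
    have "v = (\<Sum>f\<in>F. sm (c f) f)" using F by (auto simp: sum_fun_apply)
    also have "\<dots> \<in> W" using F S W by (auto intro!: subsp_sum subsp_sm)
    finally show "v \<in> W" .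
  qed
qed

lemma vec_max:
  assumes "finite X" "v \<in> vecs X m" "v \<noteq> 0"
  shows "\<exists>B\<in>words X m. v B \<noteq> 0 \<and> supp_le v B"
proof -
  let ?Z = "{w. v w \<noteq> 0}"
  have sub: "?Z \<subseteq> words X m" using assms(2) by (auto simp: vecs_def)
  have fin: "finite ?Z" using finite_subset[OF sub finite_words[OF assms(1)]] .
  have ne: "?Z \<noteq> {}" using assms(3) by (auto simp: fun_eq_iff)
  have "Max ?Z \<in> ?Z" using Max_in[OF fin ne] .
  moreover have "\<forall>w\<in>?Z. w \<le> Max ?Z" using Max_ge[OF fin] by blast
  ultimately show ?thesis using sub unfolding supp_le_def by blast
qed

lemma words_induct:
  fixes X :: "'x::linorder set"
  assumes "finite X"
    and step: "\<And>B. B \<in> words X m \<Longrightarrow> (\<And>B'. B' \<in> words X m \<Longrightarrow> B' < B \<Longrightarrow> P B') \<Longrightarrow> P B"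
  shows "B \<in> words X m \<Longrightarrow> P B"
proof (induction B rule: measure_induct_rule[of "\<lambda>B. card {u \<in> words X m. u < B}"])
  case (less B)
  show ?case
  proof (rule step[OF less.prems])
    fix B' assume B': "B' \<in> words X m" "B' < B"
    have s1: "{u \<in> words X m. u < B'} \<subseteq> {u \<in> words X m. u < B}"
    proof
      fix u assume "u \<in> {u \<in> words X m. u < B'}"
      then show "u \<in> {u \<in> words X m. u < B}" using less_trans[of u B' B] B'(2) by simp
    qed
    have s2: "B' \<in> {u \<in> words X m. u < B}" "B' \<notin> {u \<in> words X m. u < B'}"
      using B' by auto
    have fin: "finite {u \<in> words X m. u < B}"
      using finite_words[OF assms(1)] by (rule rev_finite_subset) blast
    have "{u \<in> words X m. u < B'} \<subset> {u \<in> words X m. u < B}"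
      using s1 s2 by blast
    then have "card {u \<in> words X m. u < B'} < card {u \<in> words X m. u < B}"
      using fin by (rule psubset_card_mono[rotated])
    then show "P B'" using less.IH B' by blast
  qed
qed

lemma supp_lt_max:
  assumes "finite X" "v \<in> vecs X m" "supp_lt v B"
  shows "v = 0 \<or> (\<exists>B'\<in>words X m. B' < B \<and> v B' \<noteq> 0 \<and> supp_le v B')"
  using vec_max[OF assms(1,2)] assms(3) by (auto simp: supp_lt_def)

lemma vec_induct:
  fixes X :: "'x::linorder set" and P :: "('x list \<Rightarrow> 'k::field) \<Rightarrow> bool"
  assumes "finite X" "P 0"
    and step: "\<And>v B. v \<in> vecs X m \<Longrightarrow> B \<in> words X m \<Longrightarrow> v B \<noteq> 0 \<Longrightarrow> supp_le v B \<Longrightarrow>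
        (\<And>v'. v' \<in> vecs X m \<Longrightarrow> supp_lt v' B \<Longrightarrow> P v') \<Longrightarrow> P v"
    and v: "v \<in> vecs X m"
  shows "P v"
proof -
  have main: "\<And>B. B \<in> words X m \<Longrightarrow> \<forall>v\<in>vecs X m. v B \<noteq> 0 \<and> supp_le v B \<longrightarrow> P v"
  proof (rule words_induct[OF assms(1), where m=m])
    fix B assume B: "B \<in> words X m"
      and IH: "\<And>B'. B' \<in> words X m \<Longrightarrow> B' < B \<Longrightarrow> \<forall>v\<in>vecs X m. v B' \<noteq> 0 \<and> supp_le v B' \<longrightarrow> P v"
    show "\<forall>v\<in>vecs X m. v B \<noteq> 0 \<and> supp_le v B \<longrightarrow> P v"
    proof (intro ballI impI)
      fix v :: "'x list \<Rightarrow> 'k" assume v: "v \<in> vecs X m" "v B \<noteq> 0 \<and> supp_le v B"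
      show "P v"
      proof (rule step[OF v(1) B])
        fix v' :: "'x list \<Rightarrow> 'k" assume v': "v' \<in> vecs X m" "supp_lt v' B"
        from supp_lt_max[OF assms(1) v'] show "P v'"
          using IH v'(1) assms(2) by blast
      qed (use v in auto)
    qed
  qed
  show ?thesis
  proof (cases "v = 0")
    case True then show ?thesis using assms(2) by simp
  next
    case False
    then obtain B where "B \<in> words X m" "v B \<noteq> 0" "supp_le v B"
      using vec_max[OF assms(1) v] by blast
    then show ?thesis using main v by blast
  qed
qed



lemma mapply_vecs[simp]: "mapply X m A v \<in> vecs X m"
  by (simp add: mapply_def vecs_def)

lemma mapply_add: "mapply X m A (u + v) = mapply X m A u + mapply X m A v"
  by (auto simp: mapply_def fun_eq_iff distrib_left sum.distrib)
lemma mapply_diff: "mapply X m A (u - v) = mapply X m A u - mapply X m A v"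
  by (auto simp: mapply_def fun_eq_iff right_diff_distrib sum_subtractf)
lemma mapply_sm: "mapply X m A (sm c v) = sm c (mapply X m A v)"
  by (auto simp: mapply_def fun_eq_iff sum_distrib_left mult_ac)
lemma mapply_zero[simp]: "mapply X m A 0 = 0"
  by (auto simp: mapply_def fun_eq_iff)
lemma mapply_uminus: "mapply X m A (- v) = - mapply X m A v"
  using mapply_diff[of X m A 0 v] by simp
lemma mapply_sum: "finite I \<Longrightarrow> mapply X m A (sum f I) = (\<Sum>i\<in>I. mapply X m A (f i))"
proof (induction I rule: finite_induct)
  case empty show ?case by (simp only: sum.empty mapply_zero)
next
  case (insert x F) then show ?case by (simp only: sum.insert[OF insert.hyps] mapply_add)
qed

lemma mapply_mcomp: "mapply X m (mcomp X m A B) v = mapply X m A (mapply X m B v)"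
proof (rule ext)
  fix w'
  let ?W = "words X m"
  show "mapply X m (mcomp X m A B) v w' = mapply X m A (mapply X m B v) w'"
  proof (cases "w' \<in> ?W")
    case True
    have "mapply X m (mcomp X m A B) v w' = (\<Sum>w\<in>?W. (\<Sum>u\<in>?W. A w' u * B u w) * v w)"
      using True by (simp add: mapply_def mcomp_def)
    also have "\<dots> = (\<Sum>w\<in>?W. \<Sum>u\<in>?W. A w' u * (B u w * v w))"
      by (simp add: sum_distrib_right mult.assoc)
    also have "\<dots> = (\<Sum>u\<in>?W. \<Sum>w\<in>?W. A w' u * (B u w * v w))"
      by (rule sum.swap)
    also have "\<dots> = (\<Sum>u\<in>?W. A w' u * (\<Sum>w\<in>?W. B u w * v w))"
      by (simp add: sum_distrib_left)
    also have "\<dots> = mapply X m A (mapply X m B v) w'"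
      using True by (simp add: mapply_def)
    finally show ?thesis .
  qed (simp add: mapply_def)
qed

lemma mapply_midentity: "finite X \<Longrightarrow> v \<in> vecs X m \<Longrightarrow> mapply X m (midentity X m) v = v"
proof (rule ext)
  fix w' assume fin: "finite X" and v: "v \<in> vecs X m"
  show "mapply X m (midentity X m) v w' = v w'"
  proof (cases "w' \<in> words X m")
    case True
    have "mapply X m (midentity X m) v w' = (\<Sum>w\<in>words X m. if w = w' then v w else 0)"
      using True by (auto simp: mapply_def midentity_def intro!: sum.cong)
    also have "\<dots> = v w'" using True by (simp add: sum.delta[OF finite_words[OF fin]])
    finally show ?thesis .
  qed (use v in \<open>simp add: mapply_def vecs_out\<close>)
qed

lemma mcomp_col: "w \<in> words X m \<Longrightarrow> mcomp X m A B w' w = mapply X m A (\<lambda>u. B u w) w'"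
  by (simp add: mcomp_def mapply_def)

lemma mat_ok_col: "mat_ok X m A \<Longrightarrow> (\<lambda>w'. A w' w) \<in> vecs X m"
  by (auto simp: mat_ok_def vecs_def)

lemma mapply_word_vec:
  assumes "finite X" "mat_ok X m A" "w \<in> words X m"
  shows "mapply X m A (word_vec w) = (\<lambda>w'. A w' w)"
proof (rule ext)
  fix w'
  show "mapply X m A (word_vec w) w' = A w' w"
  proof (cases "w' \<in> words X m")
    case True
    have "mapply X m A (word_vec w) w' = (\<Sum>u\<in>words X m. if u = w then A w' u else 0)"
      using True by (auto simp: mapply_def word_vec_def intro!: sum.cong)
    also have "\<dots> = A w' w" using assms(3) by (simp add: sum.delta[OF finite_words[OF assms(1)]])
    finally show ?thesis .
  qed (use assms in \<open>simp add: mapply_def mat_ok_def\<close>)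
qed

lemma mapply_nonzero:
  assumes "mapply X m A v w' \<noteq> 0"
  shows "w' \<in> words X m \<and> (\<exists>w\<in>words X m. A w' w \<noteq> 0 \<and> v w \<noteq> 0)"
proof -
  have w': "w' \<in> words X m" using assms by (auto simp: mapply_def split: if_splits)
  then have "(\<Sum>w\<in>words X m. A w' w * v w) \<noteq> 0" using assms by (simp add: mapply_def)
  then obtain w where "w \<in> words X m" "A w' w * v w \<noteq> 0"
    by (meson sum.neutral)
  then show ?thesis using w' by auto
qed

section \<open>Reduction operators\<close>

definition supp_in :: "('x list \<Rightarrow> 'k::field) \<Rightarrow> 'x list set \<Rightarrow> bool" where
  "supp_in t A \<longleftrightarrow> (\<forall>w. t w \<noteq> 0 \<longrightarrow> w \<in> A)"

definition NW :: "'x::linorder set \<Rightarrow> nat \<Rightarrow> ('x list \<Rightarrow> 'k::field) set \<Rightarrow> 'x list set" where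
  "NW X m W = {w \<in> words X m. \<not> (\<exists>v\<in>W. v w \<noteq> 0 \<and> supp_le v w)}"

lemma supp_in_add: "supp_in u A \<Longrightarrow> supp_in v A \<Longrightarrow> supp_in (u + v) A"
  unfolding supp_in_def by (metis add.right_neutral plus_fun_apply)
lemma supp_in_diff: "supp_in u A \<Longrightarrow> supp_in v A \<Longrightarrow> supp_in (u - v) A"
  unfolding supp_in_def by (metis diff_self minus_apply)

lemma W_NW_zero:
  assumes "finite X" "subsp X m W" "x \<in> W" "supp_in x (NW X m W)"
  shows "x = 0"
proof (rule ccontr)
  assume "x \<noteq> 0"
  then obtain B where B: "B \<in> words X m" "x B \<noteq> 0" "supp_le x B"
    using vec_max[OF assms(1) subsp_vecs[OF assms(2,3)]] by blast
  then have "B \<in> NW X m W" using assms(4) by (auto simp: supp_in_def)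
  then show False using B assms(3) by (auto simp: NW_def)
qed

lemma decomp:
  assumes fin: "finite X" and W: "subsp X m W" and v: "v \<in> vecs X m"
  shows "\<exists>t. t \<in> vecs X m \<and> supp_in t (NW X m W) \<and> v - t \<in> W"
  using fin _ _ v
proof (rule vec_induct)
  show "\<exists>t. t \<in> vecs X m \<and> supp_in t (NW X m W) \<and> 0 - t \<in> W"
    by (rule exI[of _ 0]) (auto simp: supp_in_def subsp_0[OF W])
next
  fix v :: "'a list \<Rightarrow> 'b" and B
  assume v: "v \<in> vecs X m" and B: "B \<in> words X m" and vB: "v B \<noteq> 0" and sv: "supp_le v B"
    and IH: "\<And>v'. v' \<in> vecs X m \<Longrightarrow> supp_lt v' B \<Longrightarrow> \<exists>t. t \<in> vecs X m \<and> supp_in t (NW X m W) \<and> v' - t \<in> W"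
  show "\<exists>t. t \<in> vecs X m \<and> supp_in t (NW X m W) \<and> v - t \<in> W"
  proof (cases "B \<in> NW X m W")
    case True
    define v' where "v' = v - sm (v B) (word_vec B)"
    have v'v: "v' \<in> vecs X m" unfolding v'_def using v B by (intro vecs_diff vecs_sm word_vec_vecs)
    have v'l: "supp_lt v' B"
      using sv unfolding supp_lt_def supp_le_def v'_def by (auto simp: word_vec_def order_le_less)
    obtain t' where t': "t' \<in> vecs X m" "supp_in t' (NW X m W)" "v' - t' \<in> W"
      using IH[OF v'v v'l] by blast
    define t where "t = t' + sm (v B) (word_vec B)"
    have "t \<in> vecs X m" unfolding t_def using t' B by (intro vecs_add vecs_sm word_vec_vecs)
    moreover have "supp_in t (NW X m W)"
      unfolding t_def using t'(2) True by (intro supp_in_add) (auto simp: supp_in_def word_vec_def)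
    moreover have "v - t = v' - t'" unfolding t_def v'_def by (simp add: algebra_simps)
    ultimately show ?thesis using t'(3) by metis
  next
    case False
    then obtain g where g: "g \<in> W" "g B \<noteq> 0" "supp_le g B" using B by (auto simp: NW_def)
    define c where "c = v B / g B"
    define v' where "v' = v - sm c g"
    have gv: "g \<in> vecs X m" using subsp_vecs[OF W g(1)] .
    have v'v: "v' \<in> vecs X m" unfolding v'_def using v gv by (intro vecs_diff vecs_sm)
    have "v' B = 0" unfolding v'_def c_def using g(2) by simp
    moreover have "supp_le v' B" unfolding v'_def by (intro supp_le_diff supp_le_sm sv g(3))
    ultimately have v'l: "supp_lt v' B" by (rule supp_le_lt[rotated])
    obtain t' where t': "t' \<in> vecs X m" "supp_in t' (NW X m W)" "v' - t' \<in> W"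
      using IH[OF v'v v'l] by blast
    have "v - t' = (v' - t') + sm c g" unfolding v'_def by (simp add: algebra_simps)
    also have "\<dots> \<in> W" using t'(3) g(1) W by (intro subsp_add subsp_sm)
    finally show ?thesis using t' by blast
  qed
qed

definition nfW :: "'x::linorder set \<Rightarrow> nat \<Rightarrow> ('x list \<Rightarrow> 'k::field) set \<Rightarrow> ('x list \<Rightarrow> 'k) \<Rightarrow> ('x list \<Rightarrow> 'k)" where
  "nfW X m W v = (THE t. t \<in> vecs X m \<and> supp_in t (NW X m W) \<and> v - t \<in> W)"

lemma nfW_unique:
  assumes fin: "finite X" and W: "subsp X m W"
    and t1: "t1 \<in> vecs X m" "supp_in t1 (NW X m W)" "v - t1 \<in> W"
    and t2: "t2 \<in> vecs X m" "supp_in t2 (NW X m W)" "v - t2 \<in> W"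
  shows "t1 = t2"
proof -
  have "t1 - t2 = (v - t2) - (v - t1)" by simp
  also have "\<dots> \<in> W" by (rule subsp_diff[OF W t2(3) t1(3)])
  finally have "t1 - t2 = 0" using W_NW_zero[OF fin W] supp_in_diff[OF t1(2) t2(2)] by blast
  then show ?thesis by simp
qed

lemma nfW_spec:
  assumes fin: "finite X" and W: "subsp X m W" and v: "v \<in> vecs X m"
  shows "nfW X m W v \<in> vecs X m \<and> supp_in (nfW X m W v) (NW X m W) \<and> v - nfW X m W v \<in> W"
proof -
  obtain t where t: "t \<in> vecs X m \<and> supp_in t (NW X m W) \<and> v - t \<in> W"
    using decomp[OF fin W v] by blast
  have "nfW X m W v = t" unfolding nfW_def
    by (rule the_equality[where P="\<lambda>t. t \<in> vecs X m \<and> supp_in t (NW X m W) \<and> v - t \<in> W", OF t])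
      (use nfW_unique[OF fin W] t in blast)
  then show ?thesis using t by simp
qed

lemma nfW_eq:
  assumes fin: "finite X" and W: "subsp X m W" and v: "v \<in> vecs X m"
    and t: "t \<in> vecs X m" "supp_in t (NW X m W)" "v - t \<in> W"
  shows "nfW X m W v = t"
  using nfW_unique[OF fin W _ _ _ t] nfW_spec[OF fin W v] by blast

definition Tmat :: "'x::linorder set \<Rightarrow> nat \<Rightarrow> ('x list \<Rightarrow> 'k::field) set \<Rightarrow> ('x list \<Rightarrow> 'x list \<Rightarrow> 'k)" where
  "Tmat X m W = (\<lambda>w' w. if w' \<in> words X m \<and> w \<in> words X m then nfW X m W (word_vec w) w' else 0)"

lemma Tmat_col:
  assumes fin: "finite X" and W: "subsp X m W" and w: "w \<in> words X m"
  shows "(\<lambda>w'. Tmat X m W w' w) = nfW X m W (word_vec w)"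
proof (rule ext)
  fix w'
  have "nfW X m W (word_vec w) \<in> vecs X m" using nfW_spec[OF fin W word_vec_vecs[OF w]] by blast
  then show "Tmat X m W w' w = nfW X m W (word_vec w) w'"
    using w by (auto simp: Tmat_def vecs_out)
qed

lemma mapply_Tmat:
  assumes fin: "finite X" and W: "subsp X m W" and v: "v \<in> vecs X m"
  shows "mapply X m (Tmat X m W) v = nfW X m W v"
proof -
  let ?t = "mapply X m (Tmat X m W) v"
  let ?W = "words X m"
  have sp: "\<And>w. w \<in> ?W \<Longrightarrow> nfW X m W (word_vec w) \<in> vecs X m \<and> supp_in (nfW X m W (word_vec w)) (NW X m W)
      \<and> word_vec w - nfW X m W (word_vec w) \<in> W"
    using nfW_spec[OF fin W word_vec_vecs] by blast
  have supt: "supp_in ?t (NW X m W)"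
    unfolding supp_in_def
  proof (intro allI impI)
    fix w' assume "?t w' \<noteq> 0"
    from mapply_nonzero[OF this] obtain w where "w' \<in> ?W" "w \<in> ?W" "Tmat X m W w' w \<noteq> 0" by blast
    then have "nfW X m W (word_vec w) w' \<noteq> 0" by (simp add: Tmat_def)
    then show "w' \<in> NW X m W" using sp[OF \<open>w \<in> ?W\<close>] by (auto simp: supp_in_def)
  qed
  moreover have "v - ?t = (\<Sum>w\<in>?W. sm (v w) (word_vec w - nfW X m W (word_vec w)))"
  proof (rule ext)
    fix w'
    show "(v - ?t) w' = (\<Sum>w\<in>?W. sm (v w) (word_vec w - nfW X m W (word_vec w))) w'"
    proof (cases "w' \<in> ?W")
      case True
      have "(\<Sum>w\<in>?W. sm (v w) (word_vec w - nfW X m W (word_vec w))) w'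
          = (\<Sum>w\<in>?W. v w * word_vec w w') - (\<Sum>w\<in>?W. Tmat X m W w' w * v w)"
        using True by (simp add: sum_fun_apply right_diff_distrib sum_subtractf Tmat_def mult.commute)
      also have "(\<Sum>w\<in>?W. v w * word_vec w w') = v w'"
      proof -
        have "(\<Sum>w\<in>?W. v w * word_vec w w') = (\<Sum>w\<in>?W. if w = w' then v w else 0)"
          by (rule sum.cong) (auto simp: word_vec_def)
        also have "\<dots> = v w'" using True by (simp add: sum.delta[OF finite_words[OF fin]])
        finally show ?thesis .
      qed
      finally show ?thesis using True by (simp add: mapply_def sum_fun_apply)
    next
      case False
      have "\<And>w. w \<in> ?W \<Longrightarrow> nfW X m W (word_vec w) w' = 0"
        using sp False vecs_out by blast
      then show ?thesis using False v
        by (simp add: sum_fun_apply mapply_def vecs_out word_vec_def) (rule sum.neutral, auto)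
    qed
  qed
  moreover have "(\<Sum>w\<in>?W. sm (v w) (word_vec w - nfW X m W (word_vec w))) \<in> W"
    using sp finite_words[OF fin] by (intro subsp_sum[OF W] subsp_sm[OF W]) auto
  ultimately have "v - ?t \<in> W" by simp
  then show ?thesis
    using nfW_eq[OF fin W v mapply_vecs supt] by simp
qed

lemma nfW_idem:
  assumes fin: "finite X" and W: "subsp X m W" and v: "v \<in> vecs X m"
  shows "nfW X m W (nfW X m W v) = nfW X m W v"
  using nfW_spec[OF fin W v] by (intro nfW_eq[OF fin W]) (auto simp: subsp_0[OF W])

lemma Tmat_red:
  assumes fin: "finite X" and W: "subsp X m W"
  shows "reduction_op X m (Tmat X m W) \<and> ker X m (Tmat X m W) = W"
proof -
  let ?T = "Tmat X m W"
  let ?W = "words X m"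
  have matok: "mat_ok X m ?T" by (simp add: mat_ok_def Tmat_def)
  have idem: "mcomp X m ?T ?T = ?T"
  proof (intro ext)
    fix w' w
    show "mcomp X m ?T ?T w' w = ?T w' w"
    proof (cases "w \<in> ?W")
      case True
      have "mcomp X m ?T ?T w' w = mapply X m ?T (nfW X m W (word_vec w)) w'"
        by (simp only: mcomp_col[OF True] Tmat_col[OF fin W True])
      also have "\<dots> = nfW X m W (word_vec w) w'"
        using nfW_spec[OF fin W word_vec_vecs[OF True]] mapply_Tmat[OF fin W] nfW_idem[OF fin W word_vec_vecs[OF True]]
        by simp
      also have "\<dots> = ?T w' w" using Tmat_col[OF fin W True] by metis
      finally show ?thesis .
    qed (simp add: mcomp_def Tmat_def)
  qed
  have cols: "\<forall>w\<in>?W. (\<lambda>w'. ?T w' w) = word_vec w \<or> (\<forall>w'\<in>?W. ?T w' w \<noteq> 0 \<longrightarrow> lex_less w' w)"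
  proof
    fix w assume w: "w \<in> ?W"
    let ?t = "nfW X m W (word_vec w)"
    have t: "?t \<in> vecs X m" "supp_in ?t (NW X m W)" "word_vec w - ?t \<in> W"
      using nfW_spec[OF fin W word_vec_vecs[OF w]] by auto
    show "(\<lambda>w'. ?T w' w) = word_vec w \<or> (\<forall>w'\<in>?W. ?T w' w \<noteq> 0 \<longrightarrow> lex_less w' w)"
    proof (cases "w \<in> NW X m W")
      case True
      have "?t = word_vec w"
        by (rule nfW_eq[OF fin W word_vec_vecs[OF w] word_vec_vecs[OF w]])
          (use True subsp_0[OF W] in \<open>auto simp: supp_in_def word_vec_def\<close>)
      then show ?thesis using Tmat_col[OF fin W w] by simp
    next
      case False
      have "\<forall>w'\<in>?W. ?T w' w \<noteq> 0 \<longrightarrow> w' < w"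
      proof (intro ballI impI)
        fix w' assume w': "w' \<in> ?W" "?T w' w \<noteq> 0"
        then have tw': "?t w' \<noteq> 0" using Tmat_col[OF fin W w] by metis
        show "w' < w"
        proof (rule ccontr)
          assume "\<not> w' < w"
          then have le: "w \<le> w'" by simp
          have w'N: "w' \<in> NW X m W" using t(2) tw' by (auto simp: supp_in_def)
          then have "w' \<noteq> w" using False by auto
          then have lt: "w < w'" using le by simp
          have "?t \<noteq> 0" using tw' by auto
          then obtain B where B: "B \<in> ?W" "?t B \<noteq> 0" "supp_le ?t B"
            using vec_max[OF fin t(1)] by blast
          have "w' \<le> B" using B(3) tw' by (auto simp: supp_le_def)
          then have wB: "w < B" using lt by simp
          let ?k = "word_vec w - ?t"
          have "B \<noteq> w" using wB by simp
          then have kB: "?k B \<noteq> 0" using B(2) by (simp add: word_vec_def)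
          have ks: "supp_le ?k B"
            using B(3) wB by (auto simp: supp_le_def word_vec_def split: if_splits)
          have "\<exists>v\<in>W. v B \<noteq> 0 \<and> supp_le v B"
            by (rule bexI[of _ ?k], rule conjI, fact kB, fact ks, fact t(3))
          then have "B \<notin> NW X m W" by (simp add: NW_def)
          moreover have "B \<in> NW X m W" using t(2) B(2) by (auto simp: supp_in_def)
          ultimately show False by simp
        qed
      qed
      then show ?thesis by (simp add: lex_less_iff)
    qed
  qed
  have ker: "ker X m ?T = W"
  proof
    show "ker X m ?T \<subseteq> W"
    proof
      fix v assume "v \<in> ker X m ?T"
      then have v: "v \<in> vecs X m" "mapply X m ?T v = 0" by (auto simp: ker_def zero_fun_def)
      then show "v \<in> W" using nfW_spec[OF fin W v(1)] mapply_Tmat[OF fin W v(1)] by simp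
    qed
    show "W \<subseteq> ker X m ?T"
    proof
      fix v assume v: "v \<in> W"
      have vv: "v \<in> vecs X m" using subsp_vecs[OF W v] .
      have "nfW X m W v = 0"
        by (rule nfW_eq[OF fin W vv]) (use v in \<open>auto simp: supp_in_def\<close>)
      then show "v \<in> ker X m ?T" using vv mapply_Tmat[OF fin W vv] by (simp add: ker_def zero_fun_def)
    qed
  qed
  show ?thesis using matok idem cols ker by (simp add: reduction_op_def)
qed

lemma red_unique:
  assumes fin: "finite X" and W: "subsp X m W"
    and T: "reduction_op X m T" and kT: "ker X m T = W"
  shows "T = Tmat X m W"
proof -
  let ?W = "words X m"
  have matok: "mat_ok X m T" and idem: "mcomp X m T T = T"
    and cols: "\<forall>w\<in>?W. (\<lambda>w'. T w' w) = word_vec w \<or> (\<forall>w'\<in>?W. T w' w \<noteq> 0 \<longrightarrow> lex_less w' w)"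
    using T by (auto simp: reduction_op_def)
  have kerI: "y \<in> W" if "y \<in> vecs X m" "mapply X m T y = 0" for y
    using that kT by (auto simp: ker_def zero_fun_def)
  have kerD: "mapply X m T y = 0" if "y \<in> W" for y
    using that kT by (auto simp: ker_def zero_fun_def)
  have fix_nw: "(\<lambda>w'. T w' u) = word_vec u" if u: "u \<in> NW X m W" for u
  proof (rule ccontr)
    assume ne: "(\<lambda>w'. T w' u) \<noteq> word_vec u"
    have uW: "u \<in> ?W" using u by (simp add: NW_def)
    have lt: "\<And>w'. T w' u \<noteq> 0 \<Longrightarrow> w' < u"
    proof -
      fix w' assume "T w' u \<noteq> 0"
      moreover have "w' \<in> ?W" using calculation matok by (auto simp: mat_ok_def)
      ultimately show "w' < u" using cols uW ne by (auto simp: lex_less_iff)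
    qed
    let ?c = "\<lambda>w'. T w' u"
    let ?y = "word_vec u - ?c"
    have cv: "?c \<in> vecs X m" using mat_ok_col[OF matok] .
    have "mapply X m T ?c = ?c"
      using mcomp_col[OF uW, of T T] idem by (metis)
    then have "mapply X m T ?y = 0"
      using mapply_diff[of X m T "word_vec u" ?c] mapply_word_vec[OF fin matok uW] by simp
    then have yW: "?y \<in> W" using kerI vecs_diff[OF word_vec_vecs[OF uW] cv] by blast
    have "T u u = 0" using lt by auto
    then have "?y u \<noteq> 0" by (simp add: word_vec_def)
    moreover have "supp_le ?y u"
      using lt by (auto simp: supp_le_def word_vec_def order_le_less split: if_splits)
    ultimately show False using u yW by (auto simp: NW_def)
  qed
  have app: "mapply X m T x = nfW X m W x" if x: "x \<in> vecs X m" for x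
  proof -
    let ?t = "nfW X m W x"
    have t: "?t \<in> vecs X m" "supp_in ?t (NW X m W)" "x - ?t \<in> W" using nfW_spec[OF fin W x] by auto
    have "mapply X m T ?t = ?t"
    proof (rule ext)
      fix w'
      show "mapply X m T ?t w' = ?t w'"
      proof (cases "w' \<in> ?W")
        case True
        have "mapply X m T ?t w' = (\<Sum>u\<in>?W. if u = w' then ?t u else 0)"
          using True
        proof (simp add: mapply_def, intro sum.cong refl)
          fix u assume "u \<in> ?W"
          show "T w' u * ?t u = (if u = w' then ?t u else 0)"
          proof (cases "?t u = 0")
            case False
            then have "u \<in> NW X m W" using t(2) by (auto simp: supp_in_def)
            from fun_cong[OF fix_nw[OF this], of w'] show ?thesis by (auto simp: word_vec_def)
          qed auto
        qed
        also have "\<dots> = ?t w'" using True by (simp add: sum.delta[OF finite_words[OF fin]])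
        finally show ?thesis .
      qed (use t(1) in \<open>simp add: mapply_def vecs_out\<close>)
    qed
    moreover have "mapply X m T (x - ?t) = 0" using kerD[OF t(3)] .
    ultimately show ?thesis using mapply_diff[of X m T x ?t] by simp
  qed
  show ?thesis
  proof (intro ext)
    fix w' w
    show "T w' w = Tmat X m W w' w"
    proof (cases "w \<in> ?W")
      case True
      have "T w' w = mapply X m T (word_vec w) w'" using mapply_word_vec[OF fin matok True] by simp
      also have "\<dots> = nfW X m W (word_vec w) w'" using app[OF word_vec_vecs[OF True]] by simp
      also have "\<dots> = Tmat X m W w' w" using Tmat_col[OF fin W True] by metis
      finally show ?thesis .
    qed (use matok in \<open>simp add: mat_ok_def Tmat_def\<close>)
  qed
qed

theorem theta_inv_ker:
  assumes fin: "finite X" and W: "subsp X m W"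
  shows "ker X m (theta_inv X m W) = W"
proof -
  have "theta_inv X m W = Tmat X m W"
    unfolding theta_inv_def
    by (rule the_equality) (use Tmat_red[OF fin W] red_unique[OF fin W] in auto)
  then show ?thesis using Tmat_red[OF fin W] by simp
qed



section \<open>Slices and padding\<close>

definition slice :: "('x list \<Rightarrow> 'k) \<Rightarrow> 'x list \<Rightarrow> 'x list \<Rightarrow> ('x list \<Rightarrow> 'k)" where
  "slice v a b = (\<lambda>u. v (a @ u @ b))"

lemma slice_apply[simp]: "slice v a b u = v (a @ u @ b)" by (simp add: slice_def)

lemma slice_slice: "slice (slice v a b) a' b' = slice v (a @ a') (b' @ b)"
  by (simp add: slice_def)

lemma slice_add: "slice (u + v) a b = slice u a b + slice v a b" by (simp add: slice_def fun_eq_iff)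
lemma slice_diff: "slice (u - v) a b = slice u a b - slice v a b" by (simp add: slice_def fun_eq_iff)
lemma slice_sm: "slice (sm c v) a b = sm c (slice v a b)" by (simp add: slice_def fun_eq_iff)
lemma slice_zero[simp]: "slice 0 a b = 0" by (simp add: slice_def fun_eq_iff)
lemma slice_sum: "slice (sum f I) a b = (\<Sum>i\<in>I. slice (f i) a b)"
  by (simp add: slice_def fun_eq_iff sum_fun_apply)

lemma slice_vecs:
  assumes "v \<in> vecs X (i + L + j)" "a \<in> words X i" "b \<in> words X j"
  shows "slice v a b \<in> vecs X L"
  using assms unfolding vecs_def by (auto simp: in_words)

lemma take_mid_drop: "x = take i x @ take K (drop i x) @ drop (i + K) x"
proof -
  have "x = take i x @ drop i x" by simp
  also have "drop i x = take K (drop i x) @ drop K (drop i x)" by (rule append_take_drop_id[symmetric])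
  also have "drop K (drop i x) = drop (i + K) x" by (simp add: add.commute)
  finally show ?thesis .
qed

lemma pad_at:
  assumes "length a' = length a" "length b' = length b"
  shows "pad a g b (a' @ u @ b') = (if a' = a \<and> b' = b then g u else 0)"
  using assms by (simp add: pad_def)

lemma pad_decomp:
  assumes "length a + length b \<le> length x" "take (length a) x = a" "drop (length x - length b) x = b"
  shows "x = a @ drop (length a) (take (length x - length b) x) @ b"
proof -
  have "x = take (length x - length b) x @ drop (length x - length b) x" by simp
  also have "take (length x - length b) x = take (length a) (take (length x - length b) x) @ drop (length a) (take (length x - length b) x)"
    by (rule append_take_drop_id[symmetric])
  also have "take (length a) (take (length x - length b) x) = a"
  proof -
    have "length a \<le> length x - length b" using assms(1) by simp
    then show ?thesis using assms(2) by (simp add: min_def)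
  qed
  finally show ?thesis using assms(3) by simp
qed

lemma pad_out:
  assumes "a \<in> words X i" "b \<in> words X j" "g \<in> vecs X L" "x \<notin> words X (i + L + j)"
  shows "pad a g b x = 0"
proof (cases "length a + length b \<le> length x \<and> take (length a) x = a \<and> drop (length x - length b) x = b")
  case True
  let ?mid = "drop (length a) (take (length x - length b) x)"
  have x: "x = a @ ?mid @ b" using pad_decomp True by blast
  have "?mid \<notin> words X L"
  proof
    assume "?mid \<in> words X L"
    then have "a @ ?mid @ b \<in> words X (i + L + j)" using assms(1,2) by (auto simp: in_words)
    then show False using x assms(4) by simp
  qed
  then show ?thesis using True assms(3) by (simp add: pad_def vecs_out)
qed (auto simp: pad_def)

lemma pad_vecs:
  assumes "a \<in> words X i" "b \<in> words X j" "g \<in> vecs X L"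
  shows "pad a g b \<in> vecs X (i + L + j)"
  using pad_out[OF assms] by (auto simp: vecs_def)

lemma slice_pad:
  assumes "a \<in> words X i" "a' \<in> words X i" "b \<in> words X j" "b' \<in> words X j"
  shows "slice (pad a' g b') a b = (if a = a' \<and> b = b' then g else 0)"
  using assms by (auto simp: slice_def pad_at in_words fun_eq_iff)

lemma vec_decomp:
  assumes fin: "finite X" and v: "v \<in> vecs X (i + L + j)"
  shows "v = (\<Sum>p\<in>words X i \<times> words X j. pad (fst p) (slice v (fst p) (snd p)) (snd p))"
proof (rule ext)
  fix x
  let ?P = "words X i \<times> words X j"
  have finP: "finite ?P" using finite_words[OF fin] by simp
  show "v x = (\<Sum>p\<in>?P. pad (fst p) (slice v (fst p) (snd p)) (snd p)) x"
  proof (cases "x \<in> words X (i + L + j)")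
    case True
    let ?a = "take i x" and ?b = "drop (i + L) x" and ?u = "take L (drop i x)"
    have x: "x = ?a @ ?u @ ?b" by (rule take_mid_drop)
    have ab: "(?a, ?b) \<in> ?P" using True by (auto simp: in_words dest: in_set_takeD in_set_dropD)
    have "(\<Sum>p\<in>?P. pad (fst p) (slice v (fst p) (snd p)) (snd p)) x
        = (\<Sum>p\<in>?P. if p = (?a, ?b) then v x else 0)"
    proof (simp only: sum_fun_apply, rule sum.cong[OF refl])
      fix p assume p: "p \<in> ?P"
      have "pad (fst p) (slice v (fst p) (snd p)) (snd p) (?a @ ?u @ ?b) = (if ?a = fst p \<and> ?b = snd p then slice v (fst p) (snd p) ?u else 0)"
        by (rule pad_at) (use p True in \<open>auto simp: in_words\<close>)
      then show "pad (fst p) (slice v (fst p) (snd p)) (snd p) x = (if p = (?a, ?b) then v x else 0)"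
        using x by (cases p) auto
    qed
    also have "\<dots> = v x" using ab finP by (simp add: sum.delta')
    finally show ?thesis by simp
  next
    case False
    have "\<And>p. p \<in> ?P \<Longrightarrow> pad (fst p) (slice v (fst p) (snd p)) (snd p) x = 0"
      by (rule pad_out[OF _ _ _ False]) (auto intro: slice_vecs[OF v])
    then show ?thesis using False v by (simp add: sum_fun_apply vecs_out)
  qed
qed

section \<open>Tensor subspaces\<close>

lemma tens_char:
  assumes fin: "finite X" and W: "subsp X L W" and M: "M = i + L + j"
  shows "tens X i W j = {v \<in> vecs X M. \<forall>a\<in>words X i. \<forall>b\<in>words X j. slice v a b \<in> W}"
proof
  let ?S = "{pad a g b | a g b. a \<in> words X i \<and> g \<in> W \<and> b \<in> words X j}"
  have Sv: "?S \<subseteq> vecs X M" using pad_vecs subsp_vecs[OF W] M by blast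
  show "tens X i W j \<subseteq> {v \<in> vecs X M. \<forall>a\<in>words X i. \<forall>b\<in>words X j. slice v a b \<in> W}"
  proof
    fix v assume "v \<in> tens X i W j"
    then have v: "v \<in> lin_span ?S" by (simp add: tens_def)
    then obtain F c where F: "finite F" "F \<subseteq> ?S" "v = (\<lambda>w. \<Sum>f\<in>F. c f * f w)"
      by (auto simp: lin_span_def)
    have vv: "v \<in> vecs X M" using lin_span_vecs[OF Sv] v by blast
    have "slice v a b \<in> W" if a: "a \<in> words X i" and b: "b \<in> words X j" for a b
    proof -
      have "slice v a b = (\<Sum>f\<in>F. sm (c f) (slice f a b))"
        using F(3) by (simp add: fun_eq_iff sum_fun_apply)
      also have "\<dots> \<in> W"
      proof (rule subsp_sum[OF W F(1)], rule subsp_sm[OF W])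
        fix f assume "f \<in> F"
        then obtain a' g b' where f: "f = pad a' g b'" "a' \<in> words X i" "g \<in> W" "b' \<in> words X j"
          using F(2) by blast
        show "slice f a b \<in> W"
          using slice_pad[OF a f(2) b f(4), of g] f(1,3) subsp_0[OF W] by simp
      qed
      finally show ?thesis .
    qed
    then show "v \<in> {v \<in> vecs X M. \<forall>a\<in>words X i. \<forall>b\<in>words X j. slice v a b \<in> W}" using vv by blast
  qed
  show "{v \<in> vecs X M. \<forall>a\<in>words X i. \<forall>b\<in>words X j. slice v a b \<in> W} \<subseteq> tens X i W j"
  proof
    fix v assume "v \<in> {v \<in> vecs X M. \<forall>a\<in>words X i. \<forall>b\<in>words X j. slice v a b \<in> W}"
    then have v: "v \<in> vecs X (i + L + j)" and sl: "\<forall>a\<in>words X i. \<forall>b\<in>words X j. slice v a b \<in> W"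
      using M by auto
    have "v = (\<Sum>p\<in>words X i \<times> words X j. pad (fst p) (slice v (fst p) (snd p)) (snd p))"
      by (rule vec_decomp[OF fin v])
    also have "\<dots> \<in> lin_span ?S"
    proof (rule lin_span_sum)
      show "finite (words X i \<times> words X j)" using finite_words[OF fin] by simp
      fix p assume p: "p \<in> words X i \<times> words X j"
      show "pad (fst p) (slice v (fst p) (snd p)) (snd p) \<in> lin_span ?S"
      proof (rule lin_span_base, rule CollectI, intro exI conjI)
        show "pad (fst p) (slice v (fst p) (snd p)) (snd p) = pad (fst p) (slice v (fst p) (snd p)) (snd p)" ..
      qed (use p sl in auto)
    qed
    finally show "v \<in> tens X i W j" by (simp add: tens_def)
  qed
qed

lemma tens_subsp:
  assumes "subsp X L W" "M = i + L + j"
  shows "subsp X M (tens X i W j)"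
  unfolding tens_def
  by (rule lin_span_subsp) (use pad_vecs subsp_vecs[OF assms(1)] assms(2) in blast)

lemma mapply_opmid:
  assumes fin: "finite X" and x: "x \<in> words X (i + K + j)"
  shows "mapply X (i + K + j) (opmid X K i A j) v x
       = mapply X K A (slice v (take i x) (drop (i + K) x)) (take K (drop i x))"
proof -
  let ?a = "take i x" and ?b = "drop (i + K) x" and ?u0 = "take K (drop i x)"
  let ?WM = "words X (i + K + j)" and ?WK = "words X K"
  have lx: "length x = i + K + j" "set x \<subseteq> X" using x by (auto simp: in_words)
  have a: "?a \<in> words X i" and b: "?b \<in> words X j" and u0: "?u0 \<in> ?WK"
    using lx by (auto simp: in_words dest: in_set_takeD in_set_dropD)
  have setq: "{y \<in> ?WM. take i y = ?a \<and> drop (i + K) y = ?b} = (\<lambda>u. ?a @ u @ ?b) ` ?WK"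
  proof
    show "{y \<in> ?WM. take i y = ?a \<and> drop (i + K) y = ?b} \<subseteq> (\<lambda>u. ?a @ u @ ?b) ` ?WK"
    proof
      fix y assume y: "y \<in> {y \<in> ?WM. take i y = ?a \<and> drop (i + K) y = ?b}"
      then have ly: "length y = i + K + j" "set y \<subseteq> X" by (auto simp: in_words)
      have "y = take i y @ take K (drop i y) @ drop (i + K) y"
        by (rule take_mid_drop)
      moreover have "take K (drop i y) \<in> ?WK" using ly by (auto simp: in_words dest: in_set_takeD in_set_dropD)
      ultimately show "y \<in> (\<lambda>u. ?a @ u @ ?b) ` ?WK" using y by (intro image_eqI[of _ _ "take K (drop i y)"]) auto
    qed
    show "(\<lambda>u. ?a @ u @ ?b) ` ?WK \<subseteq> {y \<in> ?WM. take i y = ?a \<and> drop (i + K) y = ?b}"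
      using a b by (auto simp: in_words)
  qed
  have inj: "inj_on (\<lambda>u. ?a @ u @ ?b) ?WK" by (auto simp: inj_on_def)
  have "mapply X (i + K + j) (opmid X K i A j) v x
      = (\<Sum>y\<in>?WM. if take i y = ?a \<and> drop (i + K) y = ?b then A ?u0 (take K (drop i y)) * v y else 0)"
    using x by (auto simp: mapply_def opmid_def intro!: sum.cong)
  also have "\<dots> = (\<Sum>y\<in>{y \<in> ?WM. take i y = ?a \<and> drop (i + K) y = ?b}. A ?u0 (take K (drop i y)) * v y)"
    using finite_words[OF fin] by (simp add: sum.inter_filter)
  also have "\<dots> = (\<Sum>y\<in>(\<lambda>u. ?a @ u @ ?b) ` ?WK. A ?u0 (take K (drop i y)) * v y)"
    by (simp only: setq)
  also have "\<dots> = (\<Sum>u\<in>?WK. A ?u0 u * v (?a @ u @ ?b))"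
    using a by (simp add: sum.reindex[OF inj] in_words)
  also have "\<dots> = mapply X K A (slice v ?a ?b) ?u0"
    using u0 by (simp add: mapply_def)
  finally show ?thesis .
qed

lemma slice_opmid:
  assumes fin: "finite X" and a: "a \<in> words X i" and b: "b \<in> words X j"
  shows "slice (mapply X (i + K + j) (opmid X K i A j) v) a b = mapply X K A (slice v a b)"
proof (rule ext)
  fix u
  show "slice (mapply X (i + K + j) (opmid X K i A j) v) a b u = mapply X K A (slice v a b) u"
  proof (cases "u \<in> words X K")
    case True
    then have x: "a @ u @ b \<in> words X (i + K + j)" using a b by (auto simp: in_words)
    show ?thesis using mapply_opmid[OF fin x] a b True by (simp add: in_words)
  next
    case False
    then have "a @ u @ b \<notin> words X (i + K + j)" using a b by (auto simp: in_words)
    then show ?thesis using False by (simp add: mapply_def del: words_append)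
  qed
qed



section \<open>Leading monomials\<close>

lemma lm_prop:
  fixes X :: "'x::linorder set"
  assumes fin: "finite X" and f: "f \<in> vecs X N" "f \<noteq> 0"
  shows "lm X N f \<in> words X N \<and> f (lm X N f) \<noteq> 0 \<and> supp_le f (lm X N f)"
proof -
  obtain B where B: "B \<in> words X N" "f B \<noteq> 0" "supp_le f B" using vec_max[OF fin f] by blast
  have "lm X N f = B" unfolding lm_def
  proof (rule the_equality)
    show "B \<in> words X N \<and> f B \<noteq> 0 \<and> (\<forall>u\<in>words X N. f u \<noteq> 0 \<longrightarrow> u = B \<or> lex_less u B)"
      using B by (auto simp: supp_le_def lex_less_iff order_le_less)
    fix w assume w: "w \<in> words X N \<and> f w \<noteq> 0 \<and> (\<forall>u\<in>words X N. f u \<noteq> 0 \<longrightarrow> u = w \<or> lex_less u w)"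
    then have "B \<le> w" using B by (auto simp: lex_less_iff order_le_less)
    moreover have "w \<le> B" using w B(3) by (auto simp: supp_le_def)
    ultimately show "w = B" by simp
  qed
  then show ?thesis using B by simp
qed

definition fR :: "'x::linorder set \<Rightarrow> nat \<Rightarrow> ('x list \<Rightarrow> 'k::field) set \<Rightarrow> 'x list \<Rightarrow> ('x list \<Rightarrow> 'k)" where
  "fR X N R w = (THE f. f \<in> R \<and> lm X N f = w)"

definition Eop :: "'x::linorder set \<Rightarrow> nat \<Rightarrow> ('x list \<Rightarrow> 'k::field) set \<Rightarrow> nat \<Rightarrow> nat \<Rightarrow> ('x list \<Rightarrow> 'k) set" where
  "Eop X N R m i = tens X i (Rbar X R) (m - N - i)"

definition redat :: "'x::linorder set \<Rightarrow> nat \<Rightarrow> ('x list \<Rightarrow> 'k::field) set \<Rightarrow> nat \<Rightarrow> 'x list \<Rightarrow> bool" where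
  "redat X N R i w \<longleftrightarrow> take N (drop i w) \<in> lm X N ` R"

lemma tri_supp:
  assumes "\<And>x y. A x y \<noteq> 0 \<Longrightarrow> x \<le> y" "supp_le v B"
  shows "supp_le (mapply X m A v) B"
  unfolding supp_le_def
proof (intro allI impI)
  fix w assume "mapply X m A v w \<noteq> 0"
  then obtain y where "A w y \<noteq> 0" "v y \<noteq> 0" using mapply_nonzero by blast
  then show "w \<le> B" using assms by (meson order_trans supp_le_def)
qed

lemma slices_eq:
  assumes fin: "finite X" and u: "u \<in> vecs X (i + L + j)" and v: "v \<in> vecs X (i + L + j)"
    and sl: "\<And>a b. a \<in> words X i \<Longrightarrow> b \<in> words X j \<Longrightarrow> slice u a b = slice v a b"
  shows "u = v"
proof -
  have "u = (\<Sum>p\<in>words X i \<times> words X j. pad (fst p) (slice u (fst p) (snd p)) (snd p))"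
    by (rule vec_decomp[OF fin u])
  also have "\<dots> = (\<Sum>p\<in>words X i \<times> words X j. pad (fst p) (slice v (fst p) (snd p)) (snd p))"
    by (rule sum.cong) (auto simp: sl)
  also have "\<dots> = v" by (rule vec_decomp[OF fin v, symmetric])
  finally show ?thesis .
qed

context
  fixes X :: "'x::linorder set" and N :: nat and R :: "('x list \<Rightarrow> 'k::field) set"
  assumes fin: "finite X" and red: "reduced_presentation X N R"
begin

lemma R_vecs: "R \<subseteq> vecs X N" using red by (simp add: reduced_presentation_def)

lemma R_prop:
  assumes f: "f \<in> R"
  shows "lm X N f \<in> words X N" "f (lm X N f) = 1" "supp_le f (lm X N f)"
    "\<And>w. f w \<noteq> 0 \<Longrightarrow> w \<noteq> lm X N f \<Longrightarrow> w \<notin> lm X N ` R"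
    "\<And>w. f w \<noteq> 0 \<Longrightarrow> w \<in> words X N"
proof -
  have fv: "f \<in> vecs X N" using R_vecs f by blast
  have f0: "f \<noteq> 0" and f1: "f (lm X N f) = 1" using red f by (auto simp: reduced_presentation_def zero_fun_def)
  show "lm X N f \<in> words X N" "f (lm X N f) = 1" "supp_le f (lm X N f)"
    using lm_prop[OF fin fv f0] f1 by auto
  show "\<And>w. f w \<noteq> 0 \<Longrightarrow> w \<in> words X N" using fv by (auto simp: vecs_def)
  then show "\<And>w. f w \<noteq> 0 \<Longrightarrow> w \<noteq> lm X N f \<Longrightarrow> w \<notin> lm X N ` R"
    using red f by (auto simp: reduced_presentation_def)
qed

lemma lm_inj: "f \<in> R \<Longrightarrow> g \<in> R \<Longrightarrow> lm X N f = lm X N g \<Longrightarrow> f = g"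
  using red by (auto simp: reduced_presentation_def)

lemma fR_prop: "w \<in> lm X N ` R \<Longrightarrow> fR X N R w \<in> R \<and> lm X N (fR X N R w) = w"
proof -
  assume "w \<in> lm X N ` R"
  then obtain f where f: "f \<in> R" "w = lm X N f" by blast
  have "fR X N R w = f" unfolding fR_def
    by (rule the_equality) (use f lm_inj in auto)
  then show ?thesis using f by simp
qed

lemma fR_lm: "f \<in> R \<Longrightarrow> fR X N R (lm X N f) = f"
  using fR_prop lm_inj by blast

lemma LM_words: "lm X N ` R \<subseteq> words X N" using R_prop(1) by blast

lemma LM_finite: "finite (lm X N ` R)"
  using finite_subset[OF LM_words finite_words[OF fin]] .

lemma fR_at:
  assumes w: "w \<in> lm X N ` R" and w': "w' \<in> lm X N ` R"
  shows "fR X N R w w' = (if w' = w then 1 else 0)"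
proof -
  have f: "fR X N R w \<in> R" "lm X N (fR X N R w) = w" using fR_prop[OF w] by auto
  show ?thesis
  proof (cases "w' = w")
    case True then show ?thesis using R_prop(2)[OF f(1)] f(2) by simp
  next
    case False
    then show ?thesis using R_prop(4)[OF f(1), of w'] f(2) w' by auto
  qed
qed

lemma mapply_S:
  "mapply X N (Smat X N R) v = (\<lambda>w'. if w' \<in> words X N then v w' - (\<Sum>w\<in>lm X N ` R. v w * fR X N R w w') else 0)"
proof (rule ext)
  fix w'
  let ?W = "words X N" and ?L = "lm X N ` R"
  show "mapply X N (Smat X N R) v w' = (if w' \<in> ?W then v w' - (\<Sum>w\<in>?L. v w * fR X N R w w') else 0)"
  proof (cases "w' \<in> ?W")
    case True
    have "mapply X N (Smat X N R) v w' = (\<Sum>w\<in>?W. Smat X N R w' w * v w)"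
      using True by (simp add: mapply_def)
    also have "\<dots> = (\<Sum>w\<in>?W. (if w = w' then v w else 0) - (if w \<in> ?L then v w * fR X N R w w' else 0))"
      by (rule sum.cong[OF refl]) (use True in \<open>auto simp: Smat_def word_vec_def fR_def algebra_simps\<close>)
    also have "\<dots> = v w' - (\<Sum>w\<in>?W. if w \<in> ?L then v w * fR X N R w w' else 0)"
      using True finite_words[OF fin] by (simp add: sum_subtractf sum.delta')
    also have "(\<Sum>w\<in>?W. if w \<in> ?L then v w * fR X N R w w' else 0) = (\<Sum>w\<in>?L. v w * fR X N R w w')"
    proof -
      have "(\<Sum>w\<in>?W. if w \<in> ?L then v w * fR X N R w w' else 0) = (\<Sum>w\<in>?W \<inter> ?L. v w * fR X N R w w')"
        by (rule sum.inter_restrict[OF finite_words[OF fin], symmetric])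
      also have "?W \<inter> ?L = ?L" using LM_words by blast
      finally show ?thesis .
    qed
    finally show ?thesis using True by simp
  qed (simp add: mapply_def)
qed

lemma S_LM: "w' \<in> lm X N ` R \<Longrightarrow> mapply X N (Smat X N R) v w' = 0"
proof -
  assume w': "w' \<in> lm X N ` R"
  have "(\<Sum>w\<in>lm X N ` R. v w * fR X N R w w') = (\<Sum>w\<in>lm X N ` R. if w = w' then v w else 0)"
    by (rule sum.cong) (auto simp: fR_at w')
  also have "\<dots> = v w'" using w' LM_finite by (simp add: sum.delta)
  finally show ?thesis using w' LM_words by (auto simp: mapply_S)
qed

lemma S_idem: "mapply X N (Smat X N R) (mapply X N (Smat X N R) v) = mapply X N (Smat X N R) v"
proof -
  let ?y = "mapply X N (Smat X N R) v"
  have "\<And>w. w \<in> lm X N ` R \<Longrightarrow> ?y w = 0" using S_LM by blast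
  then have "(\<Sum>w\<in>lm X N ` R. ?y w * fR X N R w w') = 0" for w' by simp
  then show ?thesis
    by (subst (1) mapply_S) (auto simp: fun_eq_iff vecs_out[OF mapply_vecs])
qed

lemma S_R: "f \<in> R \<Longrightarrow> mapply X N (Smat X N R) f = 0"
proof -
  assume f: "f \<in> R"
  have "(\<Sum>w\<in>lm X N ` R. f w * fR X N R w w') = f w'" for w'
  proof -
    have "(\<Sum>w\<in>lm X N ` R. f w * fR X N R w w') = (\<Sum>w\<in>lm X N ` R. if w = lm X N f then f w' else 0)"
    proof (rule sum.cong[OF refl])
      fix w assume w: "w \<in> lm X N ` R"
      show "f w * fR X N R w w' = (if w = lm X N f then f w' else 0)"
      proof (cases "w = lm X N f")
        case True then show ?thesis using R_prop(2)[OF f] fR_lm[OF f] by simp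
      next
        case False
        then have "f w = 0" using R_prop(4)[OF f, of w] w by auto
        then show ?thesis using False by simp
      qed
    qed
    also have "\<dots> = f w'" using LM_finite f by (simp add: sum.delta')
    finally show ?thesis .
  qed
  then show ?thesis by (simp add: mapply_S fun_eq_iff)
qed

lemma Rbar_subsp: "subsp X N (Rbar X R)"
  unfolding Rbar_def by (rule lin_span_subsp[OF R_vecs])

lemma S_ker:
  assumes v: "v \<in> vecs X N"
  shows "mapply X N (Smat X N R) v = 0 \<longleftrightarrow> v \<in> Rbar X R"
proof
  assume "v \<in> Rbar X R"
  then obtain F c where F: "finite F" "F \<subseteq> R" "v = (\<lambda>w. \<Sum>f\<in>F. c f * f w)"
    by (auto simp: Rbar_def lin_span_def)
  have "v = (\<Sum>f\<in>F. sm (c f) f)" using F(3) by (simp add: fun_eq_iff sum_fun_apply)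
  then have "mapply X N (Smat X N R) v = (\<Sum>f\<in>F. sm (c f) (mapply X N (Smat X N R) f))"
    using F(1) by (simp add: mapply_sum mapply_sm)
  also have "\<dots> = 0"
  proof (rule sum.neutral, rule ballI)
    fix f assume "f \<in> F"
    then have "mapply X N (Smat X N R) f = 0" using F(2) S_R by blast
    then show "sm (c f) (mapply X N (Smat X N R) f) = 0" by (simp add: fun_eq_iff)
  qed
  finally show "mapply X N (Smat X N R) v = 0" .
next
  assume S0: "mapply X N (Smat X N R) v = 0"
  let ?L = "lm X N ` R"
  have eq: "v = (\<lambda>w'. \<Sum>w\<in>?L. v w * fR X N R w w')"
  proof (rule ext)
    fix w'
    show "v w' = (\<Sum>w\<in>?L. v w * fR X N R w w')"
    proof (cases "w' \<in> words X N")
      case True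
      then show ?thesis using fun_cong[OF S0, of w'] by (simp add: mapply_S)
    next
      case False
      have "\<And>w. w \<in> ?L \<Longrightarrow> fR X N R w w' = 0"
        using fR_prop R_vecs False vecs_out by blast
      then show ?thesis using False v by (simp add: vecs_out)
    qed
  qed
  have inj: "inj_on (fR X N R) ?L" using fR_prop by (metis inj_onI)
  have "(\<lambda>w'. \<Sum>w\<in>?L. v w * fR X N R w w') = (\<lambda>w'. \<Sum>f\<in>fR X N R ` ?L. v (lm X N f) * f w')"
    by (simp add: sum.reindex[OF inj] fR_prop)
  moreover have "fR X N R ` ?L \<subseteq> R" using fR_prop by blast
  ultimately show "v \<in> Rbar X R" unfolding Rbar_def lin_span_def
    using eq LM_finite by (intro CollectI exI[of _ "fR X N R ` ?L"] exI[of _ "\<lambda>f. v (lm X N f)"]) auto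
qed

lemma S_tri: "Smat X N R w' w \<noteq> 0 \<Longrightarrow> w' \<le> w"
proof -
  assume ne: "Smat X N R w' w \<noteq> 0"
  show "w' \<le> w"
  proof (cases "w \<in> lm X N ` R \<and> w' \<noteq> w")
    case True
    then have "fR X N R w w' \<noteq> 0" using ne by (auto simp: Smat_def word_vec_def fR_def split: if_splits)
    then show ?thesis using R_prop(3)[of "fR X N R w"] fR_prop True by (auto simp: supp_le_def)
  next
    case False
    then show ?thesis using ne by (auto simp: Smat_def word_vec_def split: if_splits)
  qed
qed

lemma S_col: "w \<in> words X N \<Longrightarrow> w \<notin> lm X N ` R \<Longrightarrow> Smat X N R w' w = word_vec w w'"
  by (auto simp: Smat_def word_vec_def)

end



fun altap :: "'x set \<Rightarrow> nat \<Rightarrow> ('x list \<Rightarrow> 'x list \<Rightarrow> 'k::field) \<Rightarrow> ('x list \<Rightarrow> 'x list \<Rightarrow> 'k) \<Rightarrow> nat \<Rightarrow> ('x list \<Rightarrow> 'k) \<Rightarrow> ('x list \<Rightarrow> 'k)" where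
  "altap X m t s 0 v = v"
| "altap X m t s (Suc k) v = mapply X m (if even k then s else t) (altap X m t s k v)"

lemma mapply_braid: "finite X \<Longrightarrow> v \<in> vecs X m \<Longrightarrow> mapply X m (braid X m t s k) v = altap X m t s k v"
  by (induction k) (simp_all add: mapply_midentity mapply_mcomp)

lemma altap_add: "altap X m t s k (u + v) = altap X m t s k u + altap X m t s k v"
proof (induction k)
  case 0 show ?case by (simp only: altap.simps)
next
  case (Suc k) show ?case by (simp only: altap.simps Suc.IH mapply_add)
qed

lemma altap_zero: "altap X m t s k 0 = 0"
proof (induction k)
  case 0 show ?case by (simp only: altap.simps)
next
  case (Suc k) show ?case by (simp only: altap.simps Suc.IH mapply_zero)
qed

lemma slice_altap:
  assumes "\<And>y. slice (mapply X m T1 y) a b = mapply X L T1' (slice y a b)"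
    and "\<And>y. slice (mapply X m T2 y) a b = mapply X L T2' (slice y a b)"
  shows "slice (altap X m T1 T2 k v) a b = altap X L T1' T2' k (slice v a b)"
proof (induction k)
  case 0 show ?case by (simp only: altap.simps)
next
  case (Suc k)
  show ?case
  proof (cases "even k")
    case True then show ?thesis by (simp only: altap.simps if_True assms Suc.IH)
  next
    case False then show ?thesis by (simp only: altap.simps if_False assms Suc.IH)
  qed
qed

lemma slices_eqM:
  assumes fin: "finite X" and M: "M = i + L + j" and u: "u \<in> vecs X M" and v: "v \<in> vecs X M"
    and sl: "\<And>a b. a \<in> words X i \<Longrightarrow> b \<in> words X j \<Longrightarrow> slice u a b = slice v a b"
  shows "u = v"
  using slices_eq[OF fin, of u i L j v] u v sl M by simp

lemma slice_vecsM:
  assumes "M = i + L + j" "v \<in> vecs X M" "a \<in> words X i" "b \<in> words X j"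
  shows "slice v a b \<in> vecs X L"
  using slice_vecs[of v X i L j a b] assms by simp

context
  fixes X :: "'x::linorder set" and N :: nat and R :: "('x list \<Rightarrow> 'k::field) set"
  assumes fin: "finite X" and red: "reduced_presentation X N R"
begin

lemma Sop_apply:
  assumes im: "i + N \<le> m" and x: "x \<in> words X m"
  shows "mapply X m (Sop X N R m i) v x
       = mapply X N (Smat X N R) (slice v (take i x) (drop (i + N) x)) (take N (drop i x))"
proof -
  define j where "j = m - N - i"
  have m: "i + N + j = m" using im by (simp add: j_def)
  have "mapply X m (Sop X N R m i) v x = mapply X (i + N + j) (opmid X N i (Smat X N R) j) v x"
    by (simp only: Sop_def j_def[symmetric] m)
  also have "\<dots> = mapply X N (Smat X N R) (slice v (take i x) (drop (i + N) x)) (take N (drop i x))"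
    by (rule mapply_opmid[OF fin]) (use x m in simp)
  finally show ?thesis .
qed

lemma Sop_slice:
  assumes im: "i + N \<le> m" and a: "a \<in> words X i" and b: "b \<in> words X (m - N - i)"
  shows "slice (mapply X m (Sop X N R m i) v) a b = mapply X N (Smat X N R) (slice v a b)"
proof -
  define j where "j = m - N - i"
  have m: "i + N + j = m" using im by (simp add: j_def)
  have "slice (mapply X m (Sop X N R m i) v) a b = slice (mapply X (i + N + j) (opmid X N i (Smat X N R) j) v) a b"
    by (simp only: Sop_def j_def[symmetric] m)
  also have "\<dots> = mapply X N (Smat X N R) (slice v a b)"
    by (rule slice_opmid[OF fin a]) (use b in \<open>simp add: j_def\<close>)
  finally show ?thesis .
qed

lemma Sop_slice_gen:
  assumes pi: "p \<le> i" and iL: "i + N \<le> p + L" and m: "m = p + L + q"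
    and a: "a \<in> words X p" and b: "b \<in> words X q"
  shows "slice (mapply X m (Sop X N R m i) v) a b = mapply X L (Sop X N R L (i - p)) (slice v a b)"
proof (rule ext)
  fix u
  show "slice (mapply X m (Sop X N R m i) v) a b u = mapply X L (Sop X N R L (i - p)) (slice v a b) u"
  proof (cases "u \<in> words X L")
    case True
    have la: "length a = p" and lb: "length b = q" and lu: "length u = L"
      using a b True by (auto simp: in_words)
    have x: "a @ u @ b \<in> words X m" using a b True m by (auto simp: in_words)
    have e1: "take i (a @ u @ b) = a @ take (i - p) u" using la lu pi iL by simp
    have e2: "drop (i + N) (a @ u @ b) = drop (i - p + N) u @ b" using la lu pi iL by simp
    have e3: "take N (drop i (a @ u @ b)) = take N (drop (i - p) u)" using la lu pi iL by simp
    have "slice (mapply X m (Sop X N R m i) v) a b u = mapply X m (Sop X N R m i) v (a @ u @ b)" by simp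
    also have "\<dots> = mapply X N (Smat X N R) (slice v (take i (a @ u @ b)) (drop (i + N) (a @ u @ b))) (take N (drop i (a @ u @ b)))"
      by (rule Sop_apply) (use iL m x in auto)
    also have "\<dots> = mapply X N (Smat X N R) (slice (slice v a b) (take (i - p) u) (drop (i - p + N) u)) (take N (drop (i - p) u))"
      by (simp only: e1 e2 e3 slice_slice)
    also have "\<dots> = mapply X L (Sop X N R L (i - p)) (slice v a b) u"
      by (rule Sop_apply[symmetric]) (use pi iL True in auto)
    finally show ?thesis .
  next
    case False
    then have "a @ u @ b \<notin> words X m" using a b m by (auto simp: in_words)
    then show ?thesis using False by (simp add: mapply_def del: words_append)
  qed
qed

lemma Eop_char:
  assumes im: "i + N \<le> m"
  shows "Eop X N R m i = {v \<in> vecs X m. \<forall>a\<in>words X i. \<forall>b\<in>words X (m - N - i). slice v a b \<in> Rbar X R}"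
  unfolding Eop_def by (rule tens_char[OF fin Rbar_subsp[OF fin red]]) (use im in simp)

lemma Eop_subsp: "i + N \<le> m \<Longrightarrow> subsp X m (Eop X N R m i)"
  unfolding Eop_def by (rule tens_subsp[OF Rbar_subsp[OF fin red]]) simp

lemma Sop_idem:
  assumes im: "i + N \<le> m"
  shows "mapply X m (Sop X N R m i) (mapply X m (Sop X N R m i) v) = mapply X m (Sop X N R m i) v"
  by (rule slices_eqM[OF fin, of m i N "m - N - i"])
    (use im in \<open>simp_all add: Sop_slice S_idem[OF fin red]\<close>)

lemma Sop_ker:
  assumes im: "i + N \<le> m" and v: "v \<in> vecs X m"
  shows "mapply X m (Sop X N R m i) v = 0 \<longleftrightarrow> v \<in> Eop X N R m i"
proof
  assume S0: "mapply X m (Sop X N R m i) v = 0"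
  have "slice v a b \<in> Rbar X R" if a: "a \<in> words X i" and b: "b \<in> words X (m - N - i)" for a b
  proof -
    have "mapply X N (Smat X N R) (slice v a b) = 0"
      using Sop_slice[OF im a b, of v] S0 by simp
    then show ?thesis
      using S_ker[OF fin red slice_vecsM[of m i N "m - N - i" v X a b]] im v a b by simp
  qed
  then show "v \<in> Eop X N R m i" using v Eop_char[OF im] by blast
next
  assume "v \<in> Eop X N R m i"
  then have sl: "\<And>a b. a \<in> words X i \<Longrightarrow> b \<in> words X (m - N - i) \<Longrightarrow> slice v a b \<in> Rbar X R"
    using Eop_char[OF im] by blast
  show "mapply X m (Sop X N R m i) v = 0"
  proof (rule slices_eqM[OF fin, of m i N "m - N - i"])
    fix a b assume a: "a \<in> words X i" and b: "b \<in> words X (m - N - i)"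
    have "slice v a b \<in> vecs X N" using slice_vecsM[of m i N "m - N - i" v X a b] im v a b by simp
    then show "slice (mapply X m (Sop X N R m i) v) a b = slice 0 a b"
      using Sop_slice[OF im a b, of v] S_ker[OF fin red] sl[OF a b] by simp
  qed (use im in simp_all)
qed

lemma Sop_diff_ker:
  assumes im: "i + N \<le> m" and v: "v \<in> vecs X m"
  shows "v - mapply X m (Sop X N R m i) v \<in> Eop X N R m i"
proof -
  have "mapply X m (Sop X N R m i) (v - mapply X m (Sop X N R m i) v) = 0"
    by (simp add: mapply_diff Sop_idem[OF im])
  then show ?thesis using Sop_ker[OF im vecs_diff[OF v mapply_vecs]] by simp
qed

lemma Sop_tri: "Sop X N R m i x y \<noteq> 0 \<Longrightarrow> x \<le> y"
proof -
  assume ne: "Sop X N R m i x y \<noteq> 0"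
  define j where "j = m - N - i"
  have c: "x \<in> words X (i + N + j)" "y \<in> words X (i + N + j)" "take i x = take i y"
    "drop (i + N) x = drop (i + N) y" "Smat X N R (take N (drop i x)) (take N (drop i y)) \<noteq> 0"
    using ne by (auto simp: Sop_def opmid_def j_def split: if_splits)
  have le: "take N (drop i x) \<le> take N (drop i y)" using S_tri[OF fin red c(5)] .
  have len: "length (take N (drop i x)) = length (take N (drop i y))" using c(1,2) by (simp add: in_words)
  have "take i x @ take N (drop i x) @ drop (i + N) x \<le> take i x @ take N (drop i y) @ drop (i + N) x"
    by (rule le_list_append_mono[OF le len])
  then show "x \<le> y" using take_mid_drop[of x i N] take_mid_drop[of y i N] c(3,4) by simp
qed

lemma Sop_supp: "supp_le v B \<Longrightarrow> supp_le (mapply X m (Sop X N R m i) v) B"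
  by (rule tri_supp[OF Sop_tri])

lemma Sop_red0:
  assumes im: "i + N \<le> m" and r: "redat X N R i x"
  shows "mapply X m (Sop X N R m i) v x = 0"
proof (cases "x \<in> words X m")
  case True
  show ?thesis using Sop_apply[OF im True] S_LM[OF fin red] r by (simp add: redat_def)
qed (simp add: mapply_def)

lemma Sop_col:
  assumes im: "i + N \<le> m" and w: "w \<in> words X m" and r: "\<not> redat X N R i w"
  shows "Sop X N R m i w' w = word_vec w w'"
proof -
  define j where "j = m - N - i"
  have m: "i + N + j = m" using im by (simp add: j_def)
  have wN: "take N (drop i w) \<in> words X N" using w im by (auto simp: in_words dest: in_set_takeD in_set_dropD)
  have "Sop X N R m i w' w = opmid X N i (Smat X N R) j w' w" by (simp add: Sop_def j_def)
  also have "\<dots> = word_vec w w'"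
  proof (cases "w' \<in> words X m \<and> take i w' = take i w \<and> drop (i + N) w' = drop (i + N) w")
    case True
    have "Smat X N R (take N (drop i w')) (take N (drop i w)) = word_vec (take N (drop i w)) (take N (drop i w'))"
      by (rule S_col[OF fin red wN]) (use r in \<open>simp add: redat_def\<close>)
    moreover have "(take N (drop i w') = take N (drop i w)) = (w' = w)"
      using take_mid_drop[of w' i N] take_mid_drop[of w i N] True by metis
    ultimately show ?thesis using True w m by (simp add: opmid_def word_vec_def)
  next
    case False
    then have "w' \<noteq> w" using w by auto
    then show ?thesis using False by (auto simp: opmid_def word_vec_def m)
  qed
  finally show ?thesis .
qed

lemma Sop_lmred:
  assumes im: "i + N \<le> m" and v: "v \<in> Eop X N R m i" and w: "w \<in> words X m"
    and vw: "v w \<noteq> 0" and s: "supp_le v w"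
  shows "redat X N R i w"
proof (rule ccontr)
  assume r: "\<not> redat X N R i w"
  have vv: "v \<in> vecs X m" using v Eop_subsp[OF im] subsp_vecs by blast
  have "mapply X m (Sop X N R m i) v w = (\<Sum>y\<in>words X m. if y = w then v y else 0)"
    using w
  proof (simp add: mapply_def, intro sum.cong refl)
    fix y assume y: "y \<in> words X m"
    show "Sop X N R m i w y * v y = (if y = w then v y else 0)"
    proof (cases "y = w")
      case True then show ?thesis using Sop_col[OF im w r, of w] by (simp add: word_vec_def)
    next
      case False
      show ?thesis
      proof (cases "v y = 0")
        case False
        then have "y \<le> w" using s by (auto simp: supp_le_def)
        then have "y < w" using \<open>y \<noteq> w\<close> by simp
        then have "Sop X N R m i w y = 0" using Sop_tri[of m i w y] by (meson leD)
        then show ?thesis using \<open>y \<noteq> w\<close> by simp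
      qed (use \<open>y \<noteq> w\<close> in simp)
    qed
  qed
  also have "\<dots> = v w" using w finite_words[OF fin] by (simp add: sum.delta')
  finally have "mapply X m (Sop X N R m i) v w \<noteq> 0" using vw by simp
  moreover have "mapply X m (Sop X N R m i) v = 0" using Sop_ker[OF im vv] v by simp
  ultimately show False by simp
qed

lemma Sop_g:
  assumes im: "i + N \<le> m" and w: "w \<in> words X m" and r: "redat X N R i w"
  shows "word_vec w - mapply X m (Sop X N R m i) (word_vec w) \<in> Eop X N R m i
       \<and> (word_vec w - mapply X m (Sop X N R m i) (word_vec w)) w = 1
       \<and> supp_le (word_vec w - mapply X m (Sop X N R m i) (word_vec w)) w"
proof (intro conjI)
  show "word_vec w - mapply X m (Sop X N R m i) (word_vec w) \<in> Eop X N R m i"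
    by (rule Sop_diff_ker[OF im word_vec_vecs[OF w]])
  show "(word_vec w - mapply X m (Sop X N R m i) (word_vec w)) w = 1"
    using Sop_red0[OF im r] by (simp add: word_vec_def)
  have "supp_le (word_vec w) w" by (simp add: supp_le_def word_vec_def)
  then show "supp_le (word_vec w - mapply X m (Sop X N R m i) (word_vec w)) w"
    by (intro supp_le_diff Sop_supp)
qed

end



section \<open>Standard representations for families\<close>

lemma common_bound:
  fixes X :: "'x::linorder set"
  assumes fin: "finite X" and finI: "finite I" and fv: "\<And>i. i \<in> I \<Longrightarrow> f i \<in> vecs X m"
  shows "(\<forall>i\<in>I. f i = 0) \<or> (\<exists>M\<in>words X m. (\<exists>i\<in>I. f i M \<noteq> 0) \<and> (\<forall>i\<in>I. supp_le (f i) M))"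
proof -
  let ?Z = "\<Union>i\<in>I. {w. f i w \<noteq> 0}"
  have sub: "?Z \<subseteq> words X m" using fv by (auto simp: vecs_def)
  have finZ: "finite ?Z" using finite_subset[OF sub finite_words[OF fin]] .
  show ?thesis
  proof (cases "?Z = {}")
    case True
    then have "\<forall>i\<in>I. f i = 0" by (auto simp: fun_eq_iff)
    then show ?thesis by blast
  next
    case False
    have "Max ?Z \<in> ?Z" using Max_in[OF finZ False] .
    moreover have "\<forall>i\<in>I. supp_le (f i) (Max ?Z)"
      using Max_ge[OF finZ] by (auto simp: supp_le_def)
    ultimately show ?thesis using sub by blast
  qed
qed

lemma family_SR:
  fixes X :: "'x::linorder set" and E :: "nat \<Rightarrow> ('x list \<Rightarrow> 'k::field) set"
  assumes fin: "finite X" and finI: "finite I"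
    and sub: "\<And>i. i \<in> I \<Longrightarrow> subsp X m (E i)"
    and PSR: "\<And>i j e1 e2 M. i \<in> I \<Longrightarrow> j \<in> I \<Longrightarrow> i \<noteq> j \<Longrightarrow> e1 \<in> E i \<Longrightarrow> e2 \<in> E j \<Longrightarrow>
        supp_lt (e1 + e2) M \<Longrightarrow> \<exists>p q. p \<in> E i \<and> q \<in> E j \<and> e1 + e2 = p + q \<and> supp_lt p M \<and> supp_lt q M"
    and e: "\<And>i. i \<in> I \<Longrightarrow> e i \<in> E i"
    and B: "supp_le (sum e I) B"
  shows "\<exists>e'. (\<forall>i\<in>I. e' i \<in> E i \<and> supp_le (e' i) B) \<and> sum e' I = sum e I"
proof -
  define u where "u = sum e I"
  let ?G = "\<lambda>e'. (\<forall>i\<in>I. e' i \<in> E i \<and> supp_le (e' i) B) \<and> sum e' I = u"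
  have vE: "\<And>i v. i \<in> I \<Longrightarrow> v \<in> E i \<Longrightarrow> v \<in> vecs X m" using sub subsp_vecs by blast
  define Q where "Q M \<longleftrightarrow> (\<forall>f. (\<forall>i\<in>I. f i \<in> E i \<and> supp_le (f i) M) \<and> sum f I = u \<longrightarrow> (\<exists>e'. ?G e'))" for M
  have main: "\<And>M. M \<in> words X m \<Longrightarrow> Q M"
  proof (rule words_induct[OF fin, where m=m and P=Q])
    fix M assume M: "M \<in> words X m"
      and IH0: "\<And>M'. M' \<in> words X m \<Longrightarrow> M' < M \<Longrightarrow> Q M'"
    have IH: "\<forall>f. (\<forall>i\<in>I. f i \<in> E i \<and> supp_le (f i) M') \<and> sum f I = u \<longrightarrow> (\<exists>e'. ?G e')"
      if "M' \<in> words X m" "M' < M" for M'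
      using IH0[OF that] unfolding Q_def .
    have finish: "\<exists>e'. ?G e'" if f: "\<forall>i\<in>I. f i \<in> E i \<and> supp_lt (f i) M" "sum f I = u" for f
    proof -
      from common_bound[OF fin finI, of f m] f(1) vE
      have "(\<forall>i\<in>I. f i = 0) \<or> (\<exists>M'\<in>words X m. (\<exists>i\<in>I. f i M' \<noteq> 0) \<and> (\<forall>i\<in>I. supp_le (f i) M'))"
        by blast
      then show ?thesis
      proof
        assume "\<forall>i\<in>I. f i = 0"
        then show ?thesis using f by (intro exI[of _ f]) auto
      next
        assume "\<exists>M'\<in>words X m. (\<exists>i\<in>I. f i M' \<noteq> 0) \<and> (\<forall>i\<in>I. supp_le (f i) M')"
        then obtain M' i where M': "M' \<in> words X m" "i \<in> I" "f i M' \<noteq> 0" "\<forall>i\<in>I. supp_le (f i) M'" by blast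
        have "M' < M" using f(1) M'(2,3) by (auto simp: supp_lt_def)
        then show ?thesis using IH[OF M'(1)] M'(4) f by blast
      qed
    qed
    show "Q M" unfolding Q_def
    proof (intro allI impI)
      fix f assume f: "(\<forall>i\<in>I. f i \<in> E i \<and> supp_le (f i) M) \<and> sum f I = u"
      show "\<exists>e'. ?G e'"
      proof (cases "M \<le> B")
        case True
        then show ?thesis using f by (intro exI[of _ f]) (auto intro: supp_le_trans)
      next
        case False
        then have BM: "B < M" by simp
        have uM: "u M = 0" using B BM unfolding u_def supp_le_def by (meson leD)
        define J where "J = {i \<in> I. f i M \<noteq> 0}"
        have JI: "J \<subseteq> I" by (auto simp: J_def)
        have finJ: "finite J" using finite_subset[OF JI finI] .
        show ?thesis
        proof (cases "J = {}")
          case True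
          have "\<forall>i\<in>I. f i \<in> E i \<and> supp_lt (f i) M"
            using f True by (auto simp: J_def intro: supp_le_lt)
          then show ?thesis using finish f by blast
        next
          case False
          then obtain i0 where i0: "i0 \<in> J" by blast
          define A where "A = J - {i0}"
          define c where "c i = f i M" for i
          define g where "g i = sm (1 / c i) (f i)" for i
          have cJ: "\<And>i. i \<in> J \<Longrightarrow> c i \<noteq> 0" by (auto simp: J_def c_def)
          have gE: "\<And>i. i \<in> J \<Longrightarrow> g i \<in> E i" unfolding g_def using f JI by (auto intro: subsp_sm[OF sub])
          have gM: "\<And>i. i \<in> J \<Longrightarrow> g i M = 1" unfolding g_def c_def using cJ c_def by auto
          have gs: "\<And>i. i \<in> J \<Longrightarrow> supp_le (g i) M" unfolding g_def using f JI by (auto intro: supp_le_sm)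
          have cg: "\<And>i w. i \<in> J \<Longrightarrow> c i * g i w = f i w" unfolding g_def using cJ by auto
          have "\<forall>i\<in>A. \<exists>pq. fst pq \<in> E i \<and> snd pq \<in> E i0 \<and> g i + - g i0 = fst pq + snd pq \<and> supp_lt (fst pq) M \<and> supp_lt (snd pq) M"
          proof
            fix i assume iA: "i \<in> A"
            then have iJ: "i \<in> J" and ne: "i \<noteq> i0" by (auto simp: A_def)
            have m1: "- g i0 \<in> E i0" using subsp_uminus[OF sub gE[OF i0]] i0 JI by blast
            have "supp_le (g i + - g i0) M" by (intro supp_le_add supp_le_uminus gs iJ i0)
            moreover have "(g i + - g i0) M = 0" using gM iJ i0 by simp
            ultimately have "supp_lt (g i + - g i0) M" by (rule supp_le_lt)
            from PSR[OF _ _ ne gE[OF iJ] m1 this] iJ i0 JI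
            obtain p q where "p \<in> E i" "q \<in> E i0" "g i + - g i0 = p + q" "supp_lt p M" "supp_lt q M" by blast
            then show "\<exists>pq. fst pq \<in> E i \<and> snd pq \<in> E i0 \<and> g i + - g i0 = fst pq + snd pq \<and> supp_lt (fst pq) M \<and> supp_lt (snd pq) M"
              by (intro exI[of _ "(p, q)"]) simp
          qed
          then obtain P where P: "\<forall>i\<in>A. fst (P i) \<in> E i \<and> snd (P i) \<in> E i0 \<and> g i + - g i0 = fst (P i) + snd (P i) \<and> supp_lt (fst (P i)) M \<and> supp_lt (snd (P i)) M"
            by (metis bchoice)
          define f' where "f' i = (if i \<in> A then sm (c i) (fst (P i)) else if i = i0 then (\<Sum>j\<in>A. sm (c j) (snd (P j))) else f i)" for i
          have finA: "finite A" using finJ by (simp add: A_def)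
          have i0I: "i0 \<in> I" using i0 JI by blast
          have f'E: "\<forall>i\<in>I. f' i \<in> E i \<and> supp_lt (f' i) M"
          proof
            fix i assume iI: "i \<in> I"
            show "f' i \<in> E i \<and> supp_lt (f' i) M"
            proof (cases "i \<in> A")
              case True
              then show ?thesis using P iI by (auto simp: f'_def intro: subsp_sm[OF sub] supp_lt_sm)
            next
              case nA: False
              show ?thesis
              proof (cases "i = i0")
                case True
                have "(\<Sum>j\<in>A. sm (c j) (snd (P j))) \<in> E i0"
                  using P finA by (intro subsp_sum[OF sub[OF i0I]] subsp_sm[OF sub[OF i0I]]) auto
                moreover have "supp_lt (\<Sum>j\<in>A. sm (c j) (snd (P j))) M"
                  using P finA by (intro supp_lt_sum supp_lt_sm) auto
                ultimately show ?thesis using True nA by (simp add: f'_def)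
              next
                case False
                then have "i \<notin> J" using nA by (auto simp: A_def)
                then have "f i M = 0" using iI by (auto simp: J_def)
                then show ?thesis using f iI nA False by (auto simp: f'_def intro: supp_le_lt)
              qed
            qed
          qed
          have sumc: "c i0 + (\<Sum>i\<in>A. c i) = 0"
          proof -
            have "c i0 + (\<Sum>i\<in>A. c i) = (\<Sum>i\<in>J. c i)"
              using sum.remove[OF finJ i0, of c] by (simp add: A_def)
            also have "\<dots> = (\<Sum>i\<in>I. f i M)"
              unfolding c_def by (rule sum.mono_neutral_left[OF finI JI]) (auto simp: J_def)
            also have "\<dots> = u M"
            proof -
              have "sum f I = u" using f by blast
              then show ?thesis by (metis sum_fun_apply)
            qed
            finally show ?thesis using uM by simp
          qed
          have "sum f' I = sum f I"
          proof (rule ext)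
            fix w
            have split: "\<And>h. sum h I = sum h (I - J) + (h i0 + sum h A)"
              using sum.subset_diff[OF JI finI] sum.remove[OF finJ i0] unfolding A_def by metis
            have p1: "(\<Sum>i\<in>I - J. f' i w) = (\<Sum>i\<in>I - J. f i w)"
              by (rule sum.cong) (use i0 in \<open>auto simp: f'_def A_def\<close>)
            have Pw: "\<And>i. i \<in> A \<Longrightarrow> fst (P i) w + snd (P i) w = g i w - g i0 w"
              using P by (metis diff_conv_add_uminus plus_fun_apply uminus_apply)
            have "f' i0 w + (\<Sum>i\<in>A. f' i w) = (\<Sum>j\<in>A. c j * snd (P j) w) + (\<Sum>i\<in>A. c i * fst (P i) w)"
              by (simp add: f'_def A_def sum_fun_apply)
            also have "\<dots> = (\<Sum>i\<in>A. c i * (fst (P i) w + snd (P i) w))"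
              by (simp add: sum.distrib[symmetric] distrib_left add.commute)
            also have "\<dots> = (\<Sum>i\<in>A. c i * g i w - c i * g i0 w)"
              by (rule sum.cong) (simp_all add: Pw right_diff_distrib)
            also have "\<dots> = (\<Sum>i\<in>A. f i w) - (\<Sum>i\<in>A. c i) * g i0 w"
              by (simp add: sum_subtractf sum_distrib_right cg A_def)
            also have "\<dots> = (\<Sum>i\<in>A. f i w) + c i0 * g i0 w"
              using sumc by (simp add: eq_neg_iff_add_eq_0[symmetric] add.commute)
            also have "\<dots> = f i0 w + (\<Sum>i\<in>A. f i w)" using cg[OF i0] by simp
            finally have p2: "f' i0 w + (\<Sum>i\<in>A. f' i w) = f i0 w + (\<Sum>i\<in>A. f i w)" .
            show "sum f' I w = sum f I w"
              unfolding sum_fun_apply using split[of "\<lambda>i. f' i w"] split[of "\<lambda>i. f i w"] p1 p2 by simp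
          qed
          then show ?thesis using finish[OF f'E] f by simp
        qed
      qed
    qed
  qed
  have "\<exists>e'. ?G e'"
  proof -
    from common_bound[OF fin finI, of e m] e vE
    have "(\<forall>i\<in>I. e i = 0) \<or> (\<exists>M\<in>words X m. (\<exists>i\<in>I. e i M \<noteq> 0) \<and> (\<forall>i\<in>I. supp_le (e i) M))" by blast
    then show ?thesis
    proof
      assume "\<forall>i\<in>I. e i = 0"
      then show ?thesis using e by (intro exI[of _ e]) (auto simp: u_def)
    next
      assume "\<exists>M\<in>words X m. (\<exists>i\<in>I. e i M \<noteq> 0) \<and> (\<forall>i\<in>I. supp_le (e i) M)"
      then obtain M where M: "M \<in> words X m" "\<forall>i\<in>I. supp_le (e i) M" by blast
      have "Q M" using main M(1) .
      then have "(\<forall>i\<in>I. e i \<in> E i \<and> supp_le (e i) M) \<and> sum e I = u \<longrightarrow> (\<exists>e'. ?G e')"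
        unfolding Q_def by (rule allE)
      then show ?thesis using M(2) e by (simp add: u_def)
    qed
  qed
  then show ?thesis by (simp add: u_def)
qed



definition SumE :: "(nat \<Rightarrow> ('x list \<Rightarrow> 'k::field) set) \<Rightarrow> nat set \<Rightarrow> ('x list \<Rightarrow> 'k) set" where
  "SumE E I = {u. \<exists>e. (\<forall>i\<in>I. e i \<in> E i) \<and> u = sum e I}"

lemma altap_vecs: "v \<in> vecs X m \<Longrightarrow> altap X m t s k v \<in> vecs X m"
  by (cases k) simp_all

context
  fixes X :: "'x::linorder set" and N :: nat and R :: "('x list \<Rightarrow> 'k::field) set"
  assumes fin: "finite X" and red: "reduced_presentation X N R"
begin

lemma altap_props:
  assumes im: "i + N \<le> m" and jm: "j + N \<le> m" and v: "v \<in> vecs X m" and B: "supp_le v B"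
  shows "altap X m (Sop X N R m j) (Sop X N R m i) k v \<in> vecs X m \<and> supp_le (altap X m (Sop X N R m j) (Sop X N R m i) k v) B"
proof (induction k)
  case 0 then show ?case using v B by simp
next
  case (Suc k)
  then show ?case by (auto intro: Sop_supp[OF fin red])
qed

lemma tele:
  assumes im: "i + N \<le> m" and jm: "j + N \<le> m" and v: "v \<in> vecs X m" and B: "supp_le v B"
  shows "\<exists>p q. p \<in> Eop X N R m i \<and> q \<in> Eop X N R m j \<and> supp_le p B \<and> supp_le q B
     \<and> v = altap X m (Sop X N R m j) (Sop X N R m i) k v + p + q"
proof (induction k)
  case 0
  have "(0::'x list \<Rightarrow> 'k) \<in> Eop X N R m i \<and> (0::'x list \<Rightarrow> 'k) \<in> Eop X N R m j \<and> supp_le (0::'x list \<Rightarrow> 'k) B \<and> supp_le (0::'x list \<Rightarrow> 'k) B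
     \<and> v = altap X m (Sop X N R m j) (Sop X N R m i) 0 v + 0 + 0"
    using subsp_0[OF Eop_subsp[OF fin red im]] subsp_0[OF Eop_subsp[OF fin red jm]] by simp
  then show ?case by blast
next
  case (Suc k)
  let ?y = "altap X m (Sop X N R m j) (Sop X N R m i) k v"
  obtain p q where pq: "p \<in> Eop X N R m i" "q \<in> Eop X N R m j" "supp_le p B" "supp_le q B" "v = ?y + p + q"
    using Suc.IH by blast
  have y: "?y \<in> vecs X m" "supp_le ?y B" using altap_props[OF im jm v B] by auto
  show ?case
  proof (cases "even k")
    case True
    let ?d = "?y - mapply X m (Sop X N R m i) ?y"
    have dE: "?d \<in> Eop X N R m i" by (rule Sop_diff_ker[OF fin red im y(1)])
    have dB: "supp_le ?d B" by (intro supp_le_diff y(2) Sop_supp[OF fin red])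
    have eq: "v = altap X m (Sop X N R m j) (Sop X N R m i) (Suc k) v + (p + ?d) + q"
      using pq(5) True by (simp add: fun_eq_iff algebra_simps)
    show ?thesis
      by (rule exI[of _ "p + ?d"], rule exI[of _ q])
        (use eq pq dE dB subsp_add[OF Eop_subsp[OF fin red im]] supp_le_add in blast)
  next
    case False
    let ?d = "?y - mapply X m (Sop X N R m j) ?y"
    have dE: "?d \<in> Eop X N R m j" by (rule Sop_diff_ker[OF fin red jm y(1)])
    have dB: "supp_le ?d B" by (intro supp_le_diff y(2) Sop_supp[OF fin red])
    have eq: "v = altap X m (Sop X N R m j) (Sop X N R m i) (Suc k) v + p + (q + ?d)"
      using pq(5) False by (simp add: fun_eq_iff algebra_simps)
    show ?thesis
      by (rule exI[of _ p], rule exI[of _ "q + ?d"])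
        (use eq pq dE dB subsp_add[OF Eop_subsp[OF fin red jm]] supp_le_add in blast)
  qed
qed

lemma kill_first:
  assumes im: "i + N \<le> m" and v: "v \<in> Eop X N R m i"
  shows "altap X m t (Sop X N R m i) (Suc k) v = 0"
proof (induction k)
  case 0
  have vv: "v \<in> vecs X m" using v Eop_subsp[OF fin red im] subsp_vecs by blast
  have "mapply X m (Sop X N R m i) v = 0" using Sop_ker[OF fin red im vv] v by simp
  then show ?case by (simp only: altap.simps even_zero if_True)
next
  case (Suc k)
  show ?case by (simp only: altap.simps(2)[of X m t _ "Suc k"] Suc.IH mapply_zero)
qed

lemma pair_SR:
  assumes sc: "side_confluent X N R" and d1: "1 \<le> d" and d2: "d \<le> N - 1" and im: "i + d + N \<le> m"
    and e1: "e1 \<in> Eop X N R m i" and e2: "e2 \<in> Eop X N R m (i + d)" and B: "supp_le (e1 + e2) B"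
  shows "\<exists>p q. p \<in> Eop X N R m i \<and> q \<in> Eop X N R m (i + d) \<and> e1 + e2 = p + q \<and> supp_le p B \<and> supp_le q B"
proof -
  let ?S = "Smat X N R"
  have im1: "i + N \<le> m" and im2: "i + d + N \<le> m" using im by auto
  obtain k where k: "k \<ge> 1" and br: "braid X (N + d) (opmid X N d ?S 0) (opmid X N 0 ?S d) k
      = braid X (N + d) (opmid X N 0 ?S d) (opmid X N d ?S 0) k"
    using sc d1 d2 unfolding side_confluent_def by blast
  let ?L = "N + d"
  have L1: "opmid X N d ?S 0 = Sop X N R ?L d" by (simp add: Sop_def)
  have L2: "opmid X N 0 ?S d = Sop X N R ?L 0" by (simp add: Sop_def)
  have loc: "altap X ?L (Sop X N R ?L d) (Sop X N R ?L 0) k z = altap X ?L (Sop X N R ?L 0) (Sop X N R ?L d) k z"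
    if "z \<in> vecs X ?L" for z
    using mapply_braid[OF fin that, of "Sop X N R ?L d" "Sop X N R ?L 0" k]
      mapply_braid[OF fin that, of "Sop X N R ?L 0" "Sop X N R ?L d" k] br L1 L2 by simp
  let ?t = "Sop X N R m (i + d)" and ?s = "Sop X N R m i"
  define q0 where "q0 = m - N - d - i"
  have mq: "m = i + ?L + q0" using im by (simp add: q0_def)
  have sl1: "slice (mapply X m ?t y) a b = mapply X ?L (Sop X N R ?L d) (slice y a b)"
    if "a \<in> words X i" "b \<in> words X q0" for a b y
    using Sop_slice_gen[OF fin red _ _ mq that, of "i + d" y] by simp
  have sl2: "slice (mapply X m ?s y) a b = mapply X ?L (Sop X N R ?L 0) (slice y a b)"
    if "a \<in> words X i" "b \<in> words X q0" for a b y
    using Sop_slice_gen[OF fin red _ _ mq that, of i y] by simp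
  have glob: "altap X m ?t ?s k v = altap X m ?s ?t k v" if v: "v \<in> vecs X m" for v
  proof (rule slices_eqM[OF fin mq])
    show "altap X m ?t ?s k v \<in> vecs X m" "altap X m ?s ?t k v \<in> vecs X m"
      using altap_vecs[OF v] by blast+
    fix a b assume a: "a \<in> words X i" and b: "b \<in> words X q0"
    have "slice (altap X m ?t ?s k v) a b = altap X ?L (Sop X N R ?L d) (Sop X N R ?L 0) k (slice v a b)"
      by (rule slice_altap) (use sl1[OF a b] sl2[OF a b] in auto)
    also have "\<dots> = altap X ?L (Sop X N R ?L 0) (Sop X N R ?L d) k (slice v a b)"
      by (rule loc) (rule slice_vecsM[OF mq v a b])
    also have "\<dots> = slice (altap X m ?s ?t k v) a b"
      by (rule slice_altap[symmetric]) (use sl1[OF a b] sl2[OF a b] in auto)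
    finally show "slice (altap X m ?t ?s k v) a b = slice (altap X m ?s ?t k v) a b" .
  qed
  obtain k' where k': "k = Suc k'" using k by (cases k) auto
  have e1v: "e1 \<in> vecs X m" using e1 Eop_subsp[OF fin red im1] subsp_vecs by blast
  have e2v: "e2 \<in> vecs X m" using e2 Eop_subsp[OF fin red im2] subsp_vecs by blast
  have "altap X m ?t ?s k (e1 + e2) = altap X m ?t ?s k e1 + altap X m ?s ?t k e2"
    by (simp add: altap_add glob[OF e2v])
  also have "\<dots> = 0" using kill_first[OF im1 e1] kill_first[OF im2 e2] k' by simp
  finally have P0: "altap X m ?t ?s k (e1 + e2) = 0" .
  obtain p q where pq: "p \<in> Eop X N R m i" "q \<in> Eop X N R m (i + d)" "supp_le p B" "supp_le q B"
    "e1 + e2 = altap X m ?t ?s k (e1 + e2) + p + q"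
    using tele[OF im1 im2 vecs_add[OF e1v e2v] B, of k] by blast
  then show ?thesis using P0 by (intro exI[of _ p] exI[of _ q]) simp
qed

lemma pair_SR_lt:
  assumes sc: "side_confluent X N R" and d1: "1 \<le> d" and d2: "d \<le> N - 1" and im: "i + d + N \<le> m"
    and e1: "e1 \<in> Eop X N R m i" and e2: "e2 \<in> Eop X N R m (i + d)" and M: "supp_lt (e1 + e2) M"
  shows "\<exists>p q. p \<in> Eop X N R m i \<and> q \<in> Eop X N R m (i + d) \<and> e1 + e2 = p + q \<and> supp_lt p M \<and> supp_lt q M"
proof -
  have im1: "i + N \<le> m" and im2: "i + d + N \<le> m" using im by auto
  have uv: "e1 + e2 \<in> vecs X m"
    using e1 e2 Eop_subsp[OF fin red im1] Eop_subsp[OF fin red im2] subsp_vecs vecs_add by blast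
  from supp_lt_max[OF fin uv M] show ?thesis
  proof
    assume "e1 + e2 = 0"
    then show ?thesis
      using subsp_0[OF Eop_subsp[OF fin red im1]] subsp_0[OF Eop_subsp[OF fin red im2]]
      by (intro exI[of _ 0]) simp
  next
    assume "\<exists>B'\<in>words X m. B' < M \<and> (e1 + e2) B' \<noteq> 0 \<and> supp_le (e1 + e2) B'"
    then obtain B' where B': "B' < M" "supp_le (e1 + e2) B'" by blast
    from pair_SR[OF sc d1 d2 im e1 e2 B'(2)] obtain p q where
      "p \<in> Eop X N R m i" "q \<in> Eop X N R m (i + d)" "e1 + e2 = p + q" "supp_le p B'" "supp_le q B'"
      by blast
    then show ?thesis using B'(1) by (intro exI[of _ p] exI[of _ q]) (auto intro: supp_le_lt_trans)
  qed
qed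

lemma PSR_gen:
  assumes sc: "side_confluent X N R" and ne: "i \<noteq> j" and im: "i + N \<le> m" and jm: "j + N \<le> m"
    and c1: "i \<le> j + (N - 1)" and c2: "j \<le> i + (N - 1)"
    and e1: "e1 \<in> Eop X N R m i" and e2: "e2 \<in> Eop X N R m j" and M: "supp_lt (e1 + e2) M"
  shows "\<exists>p q. p \<in> Eop X N R m i \<and> q \<in> Eop X N R m j \<and> e1 + e2 = p + q \<and> supp_lt p M \<and> supp_lt q M"
proof (cases "i < j")
  case True
  define d where "d = j - i"
  have jd: "i + d = j" using True by (simp add: d_def)
  have d1: "1 \<le> d" "d \<le> N - 1" using True c2 by (auto simp: d_def)
  have im': "i + d + N \<le> m" using jm jd by simp
  show ?thesis using pair_SR_lt[OF sc d1 im' e1 _ M] e2 unfolding jd by blast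
next
  case False
  then have ji: "j < i" using ne by simp
  define d where "d = i - j"
  have id: "j + d = i" using ji by (simp add: d_def)
  have d1: "1 \<le> d" "d \<le> N - 1" using ji c1 by (auto simp: d_def)
  have jm': "j + d + N \<le> m" using im id by simp
  have M': "supp_lt (e2 + e1) M" using M by (simp add: add.commute)
  obtain p q where "p \<in> Eop X N R m j" "q \<in> Eop X N R m i" "e2 + e1 = p + q" "supp_lt p M" "supp_lt q M"
    using pair_SR_lt[OF sc d1 jm' e2 _ M'] e1 unfolding id by blast
  then show ?thesis by (intro exI[of _ q] exI[of _ p]) (simp add: add.commute)
qed

lemma extra_loc:
  assumes ec: "extra_confluent X N R" and k2: "2 \<le> k" and kN: "k \<le> N - 1" and pm: "p + k + N \<le> m"
    and x1: "x \<in> Eop X N R m p" and x2: "x \<in> Eop X N R m (p + k)"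
  shows "x \<in> Eop X N R m (p + k - 1)"
proof -
  let ?Rb = "Rbar X R"
  have Rsub: "subsp X N ?Rb" by (rule Rbar_subsp[OF fin red])
  have ext: "tens X k ?Rb 0 \<inter> tens X 0 ?Rb k \<subseteq> tens X (k - 1) ?Rb 1"
    using ec k2 kN by (simp add: extra_confluent_def)
  have c1: "x \<in> vecs X m \<and> (\<forall>a\<in>words X p. \<forall>b\<in>words X (m - N - p). slice x a b \<in> ?Rb)"
    using x1 Eop_char[OF fin red, of p m] pm by auto
  have c2: "\<forall>a\<in>words X (p + k). \<forall>b\<in>words X (m - N - (p + k)). slice x a b \<in> ?Rb"
    using x2 Eop_char[OF fin red, of "p + k" m] pm by auto
  have "slice x A B' \<in> ?Rb" if A: "A \<in> words X (p + k - 1)" and B': "B' \<in> words X (m - N - (p + k - 1))" for A B'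
  proof -
    define a where "a = take p A"
    define c where "c = drop p A"
    define dd where "dd = take 1 B'"
    define b where "b = drop 1 B'"
    have A_eq: "A = a @ c" and B_eq: "B' = dd @ b" by (simp_all add: a_def c_def dd_def b_def)
    have a: "a \<in> words X p" and c: "c \<in> words X (k - 1)"
      using A k2 unfolding a_def c_def by (auto simp: in_words dest: in_set_takeD in_set_dropD)
    have dd: "dd \<in> words X 1" and b: "b \<in> words X (m - N - p - k)"
      using B' k2 pm unfolding dd_def b_def by (auto simp: in_words dest: in_set_takeD in_set_dropD)
    let ?y = "slice x a b"
    have mq: "m = p + (N + k) + (m - N - p - k)" using pm by simp
    have yv: "?y \<in> vecs X (N + k)" using slice_vecsM[OF mq _ a b] c1 by blast
    have y1: "?y \<in> tens X k ?Rb 0"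
    proof -
      have "\<forall>c'\<in>words X k. \<forall>b''\<in>words X 0. slice ?y c' b'' \<in> ?Rb"
      proof (intro ballI)
        fix c' b'' assume c': "c' \<in> words X k" and b'': "b'' \<in> words X 0"
        have "b'' = []" using b'' by (simp add: in_words)
        moreover have "a @ c' \<in> words X (p + k)" using a c' by (auto simp: in_words)
        moreover have "b \<in> words X (m - N - (p + k))" using b by (metis diff_diff_left add.assoc)
        ultimately show "slice ?y c' b'' \<in> ?Rb" using c2 by (simp add: slice_slice)
      qed
      then show ?thesis using tens_char[OF fin Rsub, of "N + k" k 0] yv by simp
    qed
    have y2: "?y \<in> tens X 0 ?Rb k"
    proof -
      have "\<forall>c'\<in>words X 0. \<forall>b''\<in>words X k. slice ?y c' b'' \<in> ?Rb"
      proof (intro ballI)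
        fix c' b'' assume c': "c' \<in> words X 0" and b'': "b'' \<in> words X k"
        have "c' = []" using c' by (simp add: in_words)
        moreover have "b'' @ b \<in> words X (m - N - p)" using b'' b pm by (auto simp: in_words)
        ultimately show "slice ?y c' b'' \<in> ?Rb" using c1 a by (simp add: slice_slice)
      qed
      then show ?thesis using tens_char[OF fin Rsub, of "N + k" 0 k] yv by simp
    qed
    have "?y \<in> tens X (k - 1) ?Rb 1" using ext y1 y2 by blast
    then have "slice ?y c dd \<in> ?Rb" using tens_char[OF fin Rsub, of "N + k" "k - 1" 1] k2 c dd by auto
    then show ?thesis using A_eq B_eq by (simp add: slice_slice)
  qed
  moreover have "x \<in> vecs X m" using c1 by blast
  ultimately show ?thesis using Eop_char[OF fin red, of "p + k - 1" m] pm by auto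
qed

lemma red_inter:
  assumes sc: "side_confluent X N R" and ec: "extra_confluent X N R"
    and ij: "i < j" and d2: "2 \<le> j - i" and dN: "j - i \<le> N - 1" and jm: "j + N \<le> m"
    and w: "w \<in> words X m" and ri: "redat X N R i w" and rj: "redat X N R j w"
  shows "redat X N R (j - 1) w"
proof -
  have im: "i + N \<le> m" using ij jm by simp
  let ?gi = "word_vec w - mapply X m (Sop X N R m i) (word_vec w)"
  let ?gj = "word_vec w - mapply X m (Sop X N R m j) (word_vec w)"
  have gi: "?gi \<in> Eop X N R m i" "?gi w = 1" "supp_le ?gi w" using Sop_g[OF fin red im w ri] by auto
  have gj: "?gj \<in> Eop X N R m j" "?gj w = 1" "supp_le ?gj w" using Sop_g[OF fin red jm w rj] by auto
  have mgj: "- ?gj \<in> Eop X N R m j" by (rule subsp_uminus[OF Eop_subsp[OF fin red jm] gj(1)])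
  have "supp_le (?gi + - ?gj) w" by (intro supp_le_add supp_le_uminus gi(3) gj(3))
  moreover have "(?gi + - ?gj) w = 0" by (simp only: plus_fun_apply uminus_apply gi(2) gj(2)) simp
  ultimately have hl: "supp_lt (?gi + - ?gj) w" by (rule supp_le_lt)
  obtain p q where pq: "p \<in> Eop X N R m i" "q \<in> Eop X N R m j" "?gi + - ?gj = p + q" "supp_lt p w" "supp_lt q w"
  proof -
    have ne: "i \<noteq> j" and c1: "i \<le> j + (N - 1)" and c2: "j \<le> i + (N - 1)" using ij dN by auto
    show ?thesis using PSR_gen[OF sc ne im jm c1 c2 gi(1) mgj hl] that by blast
  qed
  let ?v = "?gi - p"
  have v1: "?v \<in> Eop X N R m i" by (rule subsp_diff[OF Eop_subsp[OF fin red im] gi(1) pq(1)])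
  have veq: "?v = ?gj + q" using pq(3) by (simp add: fun_eq_iff algebra_simps)
  have v2: "?v \<in> Eop X N R m j" unfolding veq by (rule subsp_add[OF Eop_subsp[OF fin red jm] gj(1) pq(2)])
  have "p w = 0" using pq(4) by (auto simp: supp_lt_def)
  then have vw: "?v w \<noteq> 0" using gi(2) by simp
  have vs: "supp_le ?v w" by (intro supp_le_diff gi(3) supp_lt_le pq(4))
  define k where "k = j - i"
  have jk: "j = i + k" using ij by (simp add: k_def)
  have v3: "?v \<in> Eop X N R m (j - 1)"
    using extra_loc[OF ec, of k i m ?v] d2 dN jm v1 v2 unfolding k_def by (simp add: jk)
  show ?thesis by (rule Sop_lmred[OF fin red _ v3 w vw vs]) (use jm in simp)
qed

end



lemma SumE_subsp:
  assumes finI: "finite I" and sub: "\<And>i. i \<in> I \<Longrightarrow> subsp X m (E i)"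
  shows "subsp X m (SumE E I)"
  unfolding subsp_def
proof (intro conjI ballI allI)
  show "SumE E I \<subseteq> vecs X m"
  proof
    fix u assume "u \<in> SumE E I"
    then obtain e where e: "\<forall>i\<in>I. e i \<in> E i" "u = sum e I" by (auto simp: SumE_def)
    show "u \<in> vecs X m" unfolding e(2)
      by (rule subsp_sum[OF vecs_subsp finI]) (use e sub subsp_vecs in blast)
  qed
  have "(0::'a list \<Rightarrow> 'b) = sum (\<lambda>i. 0) I" by simp
  moreover have "\<forall>i\<in>I. (0::'a list \<Rightarrow> 'b) \<in> E i" using sub subsp_0 by blast
  ultimately show "0 \<in> SumE E I" unfolding SumE_def by (intro CollectI exI[of _ "\<lambda>i. 0"]) auto
  fix u v assume u: "u \<in> SumE E I" and v: "v \<in> SumE E I"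
  obtain e1 where e1: "\<forall>i\<in>I. e1 i \<in> E i" "u = sum e1 I" using u by (auto simp: SumE_def)
  obtain e2 where e2: "\<forall>i\<in>I. e2 i \<in> E i" "v = sum e2 I" using v by (auto simp: SumE_def)
  have "u + v = sum (\<lambda>i. e1 i + e2 i) I" using e1 e2 by (simp add: sum.distrib)
  moreover have "\<forall>i\<in>I. e1 i + e2 i \<in> E i" using e1 e2 sub subsp_add by blast
  ultimately show "u + v \<in> SumE E I" unfolding SumE_def by (intro CollectI exI[of _ "\<lambda>i. e1 i + e2 i"]) auto
next
  fix c v assume v: "v \<in> SumE E I"
  obtain e where e: "\<forall>i\<in>I. e i \<in> E i" "v = sum e I" using v by (auto simp: SumE_def)
  have "sm c v = sum (\<lambda>i. sm c (e i)) I" using e by (simp add: fun_eq_iff sum_fun_apply sum_distrib_left)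
  moreover have "\<forall>i\<in>I. sm c (e i) \<in> E i" using e sub subsp_sm by blast
  ultimately show "sm c v \<in> SumE E I" unfolding SumE_def by (intro CollectI exI[of _ "\<lambda>i. sm c (e i)"]) auto
qed

lemma SumE_single: "SumE E {i} = E i"
proof
  show "SumE E {i} \<subseteq> E i" by (auto simp: SumE_def)
  show "E i \<subseteq> SumE E {i}"
  proof
    fix v assume "v \<in> E i"
    then show "v \<in> SumE E {i}" unfolding SumE_def by (intro CollectI exI[of _ "\<lambda>_. v"]) simp
  qed
qed

lemma SumE_insert:
  assumes finI: "finite I" and iI: "i \<notin> I"
  shows "ssum (E i) (SumE E I) = SumE E (insert i I)"
proof
  show "ssum (E i) (SumE E I) \<subseteq> SumE E (insert i I)"
  proof
    fix v assume "v \<in> ssum (E i) (SumE E I)"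
    then obtain a b where ab: "a \<in> E i" "b \<in> SumE E I" "v = (\<lambda>w. a w + b w)" by (auto simp: ssum_def)
    obtain e where e: "\<forall>j\<in>I. e j \<in> E j" "b = sum e I" using ab(2) by (auto simp: SumE_def)
    define e' where "e' = e(i := a)"
    have "sum e' I = sum e I" unfolding e'_def using iI by (intro sum.cong) auto
    then have "v = sum e' (insert i I)" using ab(3) e(2) finI iI by (simp add: e'_def plus_fun_def)
    moreover have "\<forall>j\<in>insert i I. e' j \<in> E j" using e ab(1) by (auto simp: e'_def)
    ultimately show "v \<in> SumE E (insert i I)" unfolding SumE_def by blast
  qed
  show "SumE E (insert i I) \<subseteq> ssum (E i) (SumE E I)"
  proof
    fix v assume "v \<in> SumE E (insert i I)"
    then obtain e where e: "\<forall>j\<in>insert i I. e j \<in> E j" "v = sum e (insert i I)" by (auto simp: SumE_def)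
    have "v = (\<lambda>w. e i w + sum e I w)" using e(2) finI iI by (simp add: plus_fun_def)
    moreover have "sum e I \<in> SumE E I" using e(1) unfolding SumE_def by auto
    ultimately show "v \<in> ssum (E i) (SumE E I)" using e(1) unfolding ssum_def by blast
  qed
qed

lemma theta_inv_cong: "A = B \<Longrightarrow> theta_inv X m A = theta_inv X m B" by simp

context
  fixes X :: "'x::linorder set" and N :: nat and R :: "('x list \<Rightarrow> 'k::field) set"
  assumes fin: "finite X" and red: "reduced_presentation X N R"
begin

lemma ker_Sop:
  assumes im: "i + N \<le> m"
  shows "ker X m (Sop X N R m i) = Eop X N R m i"
proof
  show "ker X m (Sop X N R m i) \<subseteq> Eop X N R m i"
  proof
    fix v assume "v \<in> ker X m (Sop X N R m i)"
    then have v: "v \<in> vecs X m" "mapply X m (Sop X N R m i) v = 0" by (auto simp: ker_def zero_fun_def)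
    then show "v \<in> Eop X N R m i" using Sop_ker[OF fin red im v(1)] by simp
  qed
  show "Eop X N R m i \<subseteq> ker X m (Sop X N R m i)"
  proof
    fix v assume v: "v \<in> Eop X N R m i"
    have vv: "v \<in> vecs X m" using subsp_vecs[OF Eop_subsp[OF fin red im] v] .
    have "mapply X m (Sop X N R m i) v = 0" using Sop_ker[OF fin red im vv] v by simp
    then show "v \<in> ker X m (Sop X N R m i)" using vv by (simp add: ker_def zero_fun_def)
  qed
qed

lemma wedges_ker:
  assumes "xs \<noteq> []" "distinct xs" "\<forall>i\<in>set xs. i + N \<le> m"
  shows "ker X m (wedges X m (map (Sop X N R m) xs)) = SumE (Eop X N R m) (set xs)
       \<and> subsp X m (SumE (Eop X N R m) (set xs))"
  using assms
proof (induction xs)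
  case Nil then show ?case by simp
next
  case (Cons i xs)
  have im: "i + N \<le> m" using Cons.prems by simp
  have sub: "subsp X m (SumE (Eop X N R m) (set (i # xs)))"
    by (rule SumE_subsp) (use Cons.prems Eop_subsp[OF fin red] in auto)
  show ?case
  proof (cases xs)
    case Nil
    then show ?thesis using ker_Sop[OF im] sub by (simp add: SumE_single)
  next
    case (Cons j rest)
    have IH: "ker X m (wedges X m (map (Sop X N R m) xs)) = SumE (Eop X N R m) (set xs)"
      "subsp X m (SumE (Eop X N R m) (set xs))"
      using Cons.IH \<open>xs = j # rest\<close> Cons.prems by auto
    have "wedges X m (map (Sop X N R m) (i # xs))
        = wedge X m (Sop X N R m i) (wedges X m (map (Sop X N R m) xs))"
      using \<open>xs = j # rest\<close> by simp
    also have "\<dots> = theta_inv X m (ssum (Eop X N R m i) (SumE (Eop X N R m) (set xs)))"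
      unfolding wedge_def ker_Sop[OF im] IH(1) ..
    also have "ssum (Eop X N R m i) (SumE (Eop X N R m) (set xs)) = SumE (Eop X N R m) (set (i # xs))"
      using SumE_insert[of "set xs" i "Eop X N R m"] Cons.prems by simp
    finally show ?thesis using theta_inv_ker[OF fin sub] sub by simp
  qed
qed

lemma even_core:
  assumes sc: "side_confluent X N R" and ec: "extra_confluent X N R" and N2: "2 \<le> N"
    and am: "a + 1 + N \<le> m" and aN: "N - 2 \<le> a"
    and x1: "x \<in> SumE (Eop X N R m) {a + 2 - N..a}" and x2: "x \<in> Eop X N R m (a + 1)"
  shows "x \<in> Eop X N R m a"
proof (rule ccontr)
  assume nx: "x \<notin> Eop X N R m a"
  let ?I = "{a + 2 - N..a}"
  have aI: "a \<in> ?I" using N2 by simp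
  have im: "a + N \<le> m" and im1: "a + 1 + N \<le> m" using am by auto
  have Iok: "\<And>i. i \<in> ?I \<Longrightarrow> i + N \<le> m" using am by auto
  have xv: "x \<in> vecs X m" using x2 Eop_subsp[OF fin red im1] subsp_vecs by blast
  let ?z = "mapply X m (Sop X N R m a) x"
  have z0: "?z \<noteq> 0" using Sop_ker[OF fin red im xv] nx by simp
  obtain w where w: "w \<in> words X m" "?z w \<noteq> 0" "supp_le ?z w"
    using vec_max[OF fin mapply_vecs z0] by blast
  have nra: "\<not> redat X N R a w" using Sop_red0[OF fin red im] w(2) by blast
  let ?dz = "x - ?z"
  have dz: "?dz \<in> Eop X N R m a" by (rule Sop_diff_ker[OF fin red im xv])
  have mdz: "- ?dz \<in> Eop X N R m a" by (rule subsp_uminus[OF Eop_subsp[OF fin red im] dz])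
  have zeq: "?z = - ?dz + x" by simp
  have ra1: "redat X N R (a + 1) w"
  proof -
    have "supp_le (- ?dz + x) w" using w(3) zeq by simp
    moreover have d1: "1 \<le> (1::nat)" and d2: "1 \<le> N - 1" using N2 by auto
    ultimately have "\<exists>p q. p \<in> Eop X N R m a \<and> q \<in> Eop X N R m (a + 1) \<and> - ?dz + x = p + q \<and> supp_le p w \<and> supp_le q w"
      using pair_SR[OF fin red sc d1 d2 im1 mdz x2] by blast
    then obtain p q where pq: "p \<in> Eop X N R m a" "q \<in> Eop X N R m (a + 1)" "- ?dz + x = p + q"
      "supp_le p w" "supp_le q w" by blast
    have "p w \<noteq> 0 \<or> q w \<noteq> 0" using w(2) zeq pq(3) by (metis add.right_neutral plus_fun_apply)
    moreover have "p w = 0" using Sop_lmred[OF fin red im pq(1) w(1) _ pq(4)] nra by blast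
    ultimately have "q w \<noteq> 0" by simp
    then show ?thesis using Sop_lmred[OF fin red im1 pq(2) w(1) _ pq(5)] by blast
  qed
  have "?z \<in> SumE (Eop X N R m) ?I"
  proof -
    have sub: "subsp X m (SumE (Eop X N R m) ?I)"
      by (rule SumE_subsp) (use Iok Eop_subsp[OF fin red] in auto)
    have "?dz \<in> SumE (Eop X N R m) ?I"
      unfolding SumE_def
      by (intro CollectI exI[of _ "\<lambda>i. if i = a then ?dz else 0"] conjI)
        (use aI dz subsp_0[OF Eop_subsp[OF fin red]] Iok in \<open>auto simp: sum.delta\<close>)
    then have "x - ?dz \<in> SumE (Eop X N R m) ?I" using subsp_diff[OF sub x1] by blast
    then show ?thesis by simp
  qed
  then obtain e where e: "\<forall>i\<in>?I. e i \<in> Eop X N R m i" "?z = sum e ?I" by (auto simp: SumE_def)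
  have PSR: "\<exists>p q. p \<in> Eop X N R m i \<and> q \<in> Eop X N R m j \<and> e1 + e2 = p + q \<and> supp_lt p M \<and> supp_lt q M"
    if "i \<in> ?I" "j \<in> ?I" "i \<noteq> j" "e1 \<in> Eop X N R m i" "e2 \<in> Eop X N R m j" "supp_lt (e1 + e2) M" for i j e1 e2 M
    by (rule PSR_gen[OF fin red sc]) (use that Iok in auto)
  have "\<exists>e'. (\<forall>i\<in>?I. e' i \<in> Eop X N R m i \<and> supp_le (e' i) w) \<and> sum e' ?I = sum e ?I"
  proof (rule family_SR[OF fin _ _ PSR])
    show "supp_le (sum e ?I) w" using w(3) e(2) by simp
  qed (use e Eop_subsp[OF fin red] Iok in auto)
  then obtain e' where e': "\<forall>i\<in>?I. e' i \<in> Eop X N R m i \<and> supp_le (e' i) w" "sum e' ?I = sum e ?I"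
    by blast
  have "sum e' ?I = ?z" using e'(2) e(2)[symmetric] by (rule trans)
  then have "(\<Sum>i\<in>?I. e' i w) \<noteq> 0" using w(2) sum_fun_apply[of e' ?I w] by metis
  then obtain i where i: "i \<in> ?I" "e' i w \<noteq> 0" by (meson sum.not_neutral_contains_not_neutral)
  have ri: "redat X N R i w"
    by (rule Sop_lmred[OF fin red Iok[OF i(1)], of "e' i" w]) (use e'(1) i w(1) in auto)
  have ia: "i \<noteq> a" using ri nra by blast
  have "redat X N R (a + 1 - 1) w"
    by (rule red_inter[OF fin red sc ec _ _ _ im1 w(1) ri ra1]) (use i ia N2 in auto)
  then show False using nra by simp
qed

lemma odd_core:
  assumes ec: "extra_confluent X N R" and N2: "2 \<le> N"
    and am: "a + (N - 1) + N \<le> m" and x1: "x \<in> Eop X N R m a" and x2: "x \<in> Eop X N R m (a + (N - 1))"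
  shows "\<forall>k. k \<le> N - 1 \<longrightarrow> x \<in> Eop X N R m (a + k)"
proof -
  have step: "\<forall>t. t \<le> N - 1 \<longrightarrow> x \<in> Eop X N R m (a + (N - 1 - t))"
  proof
    fix t
    show "t \<le> N - 1 \<longrightarrow> x \<in> Eop X N R m (a + (N - 1 - t))"
    proof (induction t)
      case 0 then show ?case using x2 by simp
    next
      case (Suc t)
      show ?case
      proof
        assume t: "Suc t \<le> N - 1"
        then have xk: "x \<in> Eop X N R m (a + (N - 1 - t))" using Suc.IH by simp
        show "x \<in> Eop X N R m (a + (N - 1 - Suc t))"
        proof (cases "N - 1 - t \<ge> 2")
          case True
          have "x \<in> Eop X N R m (a + (N - 1 - t) - 1)"
            by (rule extra_loc[OF fin red ec True _ _ x1 xk]) (use am in auto)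
          moreover have "a + (N - 1 - t) - 1 = a + (N - 1 - Suc t)" using True by simp
          ultimately show ?thesis by simp
        next
          case False
          then have "N - 1 - Suc t = 0" using t by simp
          then show ?thesis using x1 by simp
        qed
      qed
    qed
  qed
  show ?thesis
  proof (intro allI impI)
    fix k assume "k \<le> N - 1"
    moreover have "N - 1 - (N - 1 - k) = k" using calculation by simp
    ultimately show "x \<in> Eop X N R m (a + k)" using step[rule_format, of "N - 1 - k"] by simp
  qed
qed

end



lemma lN_ge: "2 \<le> n \<Longrightarrow> N \<le> lN N n"
proof -
  assume "2 \<le> n"
  then have "1 \<le> n div 2" by simp
  then have "N \<le> n div 2 * N" by simp
  then show ?thesis unfolding lN_def by linarith
qed

lemma lN_2: "lN N 2 = N" by (simp add: lN_def)

lemma words_0: "words X 0 = {[]}" by (auto simp: words_def)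

context
  fixes X :: "'x::linorder set" and N :: nat and R :: "('x list \<Rightarrow> 'k::field) set"
  assumes fin: "finite X" and red: "reduced_presentation X N R"
begin

lemma J_mem:
  assumes n2: "2 \<le> n"
  shows "y \<in> J X N R n \<longleftrightarrow> y \<in> vecs X (lN N n) \<and>
    (\<forall>i \<le> lN N n - N. \<forall>a\<in>words X i. \<forall>b\<in>words X (lN N n - N - i). slice y a b \<in> Rbar X R)"
proof (cases "n = 2")
  case True
  have "y \<in> Rbar X R \<Longrightarrow> y \<in> vecs X N" using subsp_vecs[OF Rbar_subsp[OF fin red]] .
  moreover have "slice y [] [] = y" by (simp add: slice_def)
  ultimately show ?thesis using True by (auto simp: J_def lN_2 words_0)
next
  case False
  let ?L = "lN N n" and ?q = "lN N n - N"
  have LN: "N \<le> ?L" by (rule lN_ge[OF n2])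
  have Jeq: "J X N R n = (\<Inter>i\<in>{0..?q}. tens X i (Rbar X R) (?q - i))"
    using False n2 by (simp add: J_def)
  have mem: "y \<in> tens X i (Rbar X R) (?q - i) \<longleftrightarrow> y \<in> vecs X ?L \<and> (\<forall>a\<in>words X i. \<forall>b\<in>words X (?q - i). slice y a b \<in> Rbar X R)"
    if "i \<le> ?q" for i
    using tens_char[OF fin Rbar_subsp[OF fin red], of ?L i "?q - i"] that LN by auto
  show ?thesis unfolding Jeq using mem by auto
qed

lemma J_subsp:
  assumes n2: "2 \<le> n"
  shows "subsp X (lN N n) (J X N R n)"
proof (cases "n = 2")
  case True then show ?thesis using Rbar_subsp[OF fin red] by (simp add: J_def lN_2)
next
  case False
  let ?L = "lN N n" and ?q = "lN N n - N"
  have LN: "N \<le> ?L" by (rule lN_ge[OF n2])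
  have Jeq: "J X N R n = (\<Inter>i\<in>{0..?q}. tens X i (Rbar X R) (?q - i))"
    using False n2 by (simp add: J_def)
  show ?thesis unfolding Jeq
  proof (rule subsp_Inter)
    show "{0..?q} \<noteq> {}" by simp
    fix i assume "i \<in> {0..?q}"
    then show "subsp X ?L (tens X i (Rbar X R) (?q - i))"
      using LN by (intro tens_subsp[OF Rbar_subsp[OF fin red]]) simp
  qed
qed

lemma TJ_char:
  assumes n2: "2 \<le> n"
  shows "tens X p (J X N R n) 0 = {v \<in> vecs X (p + lN N n). \<forall>i. p \<le> i \<and> i \<le> p + lN N n - N \<longrightarrow> v \<in> Eop X N R (p + lN N n) i}"
proof -
  let ?L = "lN N n" and ?q = "lN N n - N" and ?Rb = "Rbar X R"
  have LN: "N \<le> ?L" by (rule lN_ge[OF n2])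
  have tc: "tens X p (J X N R n) 0 = {v \<in> vecs X (p + ?L). \<forall>a\<in>words X p. \<forall>b\<in>words X 0. slice v a b \<in> J X N R n}"
    by (rule tens_char[OF fin J_subsp[OF n2]]) simp
  have eqv: "(\<forall>a\<in>words X p. \<forall>b\<in>words X 0. slice v a b \<in> J X N R n) \<longleftrightarrow>
      (\<forall>i. p \<le> i \<and> i \<le> p + ?L - N \<longrightarrow> v \<in> Eop X N R (p + ?L) i)" if v: "v \<in> vecs X (p + ?L)" for v
  proof -
    have A: "(\<forall>a\<in>words X p. \<forall>b\<in>words X 0. slice v a b \<in> J X N R n) \<longleftrightarrow>
        (\<forall>a\<in>words X p. \<forall>i \<le> ?q. \<forall>a'\<in>words X i. \<forall>b'\<in>words X (?q - i). slice v (a @ a') b' \<in> ?Rb)"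
    proof -
      have "slice v a [] \<in> vecs X ?L" if "a \<in> words X p" for a
        by (rule slice_vecsM[of "p + ?L" p ?L 0 v X a "[]"]) (use v that in \<open>auto simp: words_0\<close>)
      then show ?thesis by (auto simp: words_0 J_mem[OF n2] slice_slice)
    qed
    have B: "(\<forall>i. p \<le> i \<and> i \<le> p + ?L - N \<longrightarrow> v \<in> Eop X N R (p + ?L) i) \<longleftrightarrow>
        (\<forall>i. p \<le> i \<and> i \<le> p + ?L - N \<longrightarrow> (\<forall>A\<in>words X i. \<forall>B\<in>words X (p + ?L - N - i). slice v A B \<in> ?Rb))"
    proof -
      have "v \<in> Eop X N R (p + ?L) i \<longleftrightarrow> (\<forall>A\<in>words X i. \<forall>B\<in>words X (p + ?L - N - i). slice v A B \<in> ?Rb)"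
        if "p \<le> i" "i \<le> p + ?L - N" for i
        using Eop_char[OF fin red, of i "p + ?L"] that LN v by auto
      then show ?thesis by blast
    qed
    have C: "(\<forall>a\<in>words X p. \<forall>i \<le> ?q. \<forall>a'\<in>words X i. \<forall>b'\<in>words X (?q - i). slice v (a @ a') b' \<in> ?Rb) \<longleftrightarrow>
        (\<forall>i. p \<le> i \<and> i \<le> p + ?L - N \<longrightarrow> (\<forall>A\<in>words X i. \<forall>B\<in>words X (p + ?L - N - i). slice v A B \<in> ?Rb))"
    proof
      assume H: "\<forall>a\<in>words X p. \<forall>i \<le> ?q. \<forall>a'\<in>words X i. \<forall>b'\<in>words X (?q - i). slice v (a @ a') b' \<in> ?Rb"
      show "\<forall>i. p \<le> i \<and> i \<le> p + ?L - N \<longrightarrow> (\<forall>A\<in>words X i. \<forall>B\<in>words X (p + ?L - N - i). slice v A B \<in> ?Rb)"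
      proof (intro allI impI ballI)
        fix i A B assume i: "p \<le> i \<and> i \<le> p + ?L - N" and A: "A \<in> words X i" and B: "B \<in> words X (p + ?L - N - i)"
        have a: "take p A \<in> words X p" and a': "drop p A \<in> words X (i - p)"
          using A i by (auto simp: in_words dest: in_set_takeD in_set_dropD)
        have B': "B \<in> words X (?q - (i - p))" using B i LN by (simp add: in_words)
        have "i - p \<le> ?q" using i LN by linarith
        then have "slice v (take p A @ drop p A) B \<in> ?Rb" using H a a' B' by blast
        then show "slice v A B \<in> ?Rb" by simp
      qed
    next
      assume H: "\<forall>i. p \<le> i \<and> i \<le> p + ?L - N \<longrightarrow> (\<forall>A\<in>words X i. \<forall>B\<in>words X (p + ?L - N - i). slice v A B \<in> ?Rb)"
      show "\<forall>a\<in>words X p. \<forall>i \<le> ?q. \<forall>a'\<in>words X i. \<forall>b'\<in>words X (?q - i). slice v (a @ a') b' \<in> ?Rb"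
      proof (intro ballI allI impI)
        fix a i a' b' assume a: "a \<in> words X p" and i: "i \<le> ?q" and a': "a' \<in> words X i" and b': "b' \<in> words X (?q - i)"
        have "a @ a' \<in> words X (p + i)" using a a' by (auto simp: in_words)
        moreover have "b' \<in> words X (p + ?L - N - (p + i))" using b' LN by simp
        moreover have "p \<le> p + i \<and> p + i \<le> p + ?L - N" using i LN by linarith
        ultimately show "slice v (a @ a') b' \<in> ?Rb" using H by blast
      qed
    qed
    show ?thesis using A B C by blast
  qed
  show ?thesis unfolding tc using eqv by blast
qed

end

lemma lN_even: "lN N (2 * q) = q * N" "lN N (2 * q + 1) = q * N + 1" "lN N (2 * q + 2) = q * N + N"
  by (simp_all add: lN_def)

lemma lN_odd: "lN N (2 * q + 1 + 1) = q * N + N" "lN N (2 * q + 1 + 2) = q * N + N + 1"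
proof -
  have "(2 * q + 1 + 1) = 2 * (q + 1)" by simp
  then show "lN N (2 * q + 1 + 1) = q * N + N" by (simp add: lN_def)
  have "(2 * q + 1 + 2) = 2 * (q + 1) + 1" by simp
  then show "lN N (2 * q + 1 + 2) = q * N + N + 1" by (simp add: lN_def)
qed

theorem lemma4p3p3:
  fixes X :: "'x::linorder set" and R :: "('x list \<Rightarrow> 'k::field) set"
    and N n m :: nat
  assumes "N \<ge> 2"
    and "reduced_presentation X N R"
    and "extra_confluent X N R"
    and "n \<ge> 2"
    and "m \<ge> lN N (n + 2)"
  shows "vee X m
           (wedges X m (map (Sop X N R m) [m - lN N (n + 2) + 1 ..< m - lN N (n + 1) + 1]))
           (F2 X N R (n - 1) m)
         = F2 X N R n m"
proof -
  note N2 = assms(1) and red = assms(2) and ec = assms(3) and n2 = assms(4) and mL = assms(5)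
  have fin: "finite X" and sc: "side_confluent X N R" using ec by (auto simp: extra_confluent_def)
  define L0 where "L0 = lN N n"
  define L1 where "L1 = lN N (n + 1)"
  define L2 where "L2 = lN N (n + 2)"
  have L0N: "N \<le> L0" unfolding L0_def by (rule lN_ge[OF n2])
  have rel: "(L1 = L0 + 1 \<and> L2 = L0 + N) \<or> (L1 = L0 + N - 1 \<and> L2 = L1 + 1)"
  proof (cases "even n")
    case True
    then obtain q where q: "n = 2 * q" by (rule evenE)
    have "L0 = q * N" unfolding L0_def q by (rule lN_even(1))
    moreover have "L1 = q * N + 1" unfolding L1_def q by (rule lN_even(2))
    moreover have "L2 = q * N + N" unfolding L2_def q by (rule lN_even(3))
    ultimately show ?thesis by simp
  next
    case False
    then obtain q where q: "n = 2 * q + 1" by (rule oddE)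
    have "L0 = q * N + 1" unfolding L0_def q by (simp add: lN_def)
    moreover have "L1 = q * N + N" unfolding L1_def q by (rule lN_odd)
    moreover have "L2 = q * N + N + 1" unfolding L2_def q by (rule lN_odd)
    ultimately show ?thesis using N2 by simp
  qed
  have L01: "L0 \<le> L1" and L12: "L1 < L2" and L1N: "N \<le> L1" using rel L0N N2 by auto
  have mL2: "L2 \<le> m" using mL by (simp add: L2_def)
  define a where "a = m - L1"
  define lo where "lo = m - L2 + 1"
  define hi where "hi = m - L1 + 1"
  let ?E = "Eop X N R m"
  let ?TJ0 = "{v \<in> vecs X m. \<forall>i. m - L0 \<le> i \<and> i \<le> m - N \<longrightarrow> v \<in> ?E i}"
  let ?TJ1 = "{v \<in> vecs X m. \<forall>i. a \<le> i \<and> i \<le> m - N \<longrightarrow> v \<in> ?E i}"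
  have TJ0: "tens X (m - L0) (J X N R n) 0 = ?TJ0"
  proof -
    have "m - L0 + lN N n = m" and "m - L0 + lN N n - N = m - N" using mL2 L01 L12 L0N unfolding L0_def by auto
    then show ?thesis using TJ_char[OF fin red n2, of "m - L0"] by (simp add: L0_def)
  qed
  have TJ1: "tens X (m - L1) (J X N R (n + 1)) 0 = ?TJ1"
  proof -
    have n3: "2 \<le> n + 1" using n2 by simp
    have "m - L1 + lN N (n + 1) = m" and "m - L1 + lN N (n + 1) - N = m - N" using mL2 L12 L1N unfolding L1_def by auto
    then show ?thesis using TJ_char[OF fin red n3, of "m - L1"] by (simp add: L1_def a_def)
  qed
  have subTJ0: "subsp X m (tens X (m - L0) (J X N R n) 0)"
    by (rule tens_subsp[OF J_subsp[OF fin red n2]]) (use mL2 L01 L12 in \<open>simp add: L0_def\<close>)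
  have F2n: "F2 X N R n m = theta_inv X m ?TJ1"
    using mL2 L12 TJ1 by (simp add: F2_def L1_def)
  have kF: "ker X m (F2 X N R (n - 1) m) = ?TJ0"
  proof -
    have "F2 X N R (n - 1) m = theta_inv X m (tens X (m - L0) (J X N R n) 0)"
      using mL2 L01 L12 n2 by (simp add: F2_def L0_def)
    then show ?thesis using theta_inv_ker[OF fin subTJ0] TJ0 by simp
  qed
  have lohi: "lo < hi" using L12 mL2 by (simp add: lo_def hi_def)
  have pos: "\<forall>i\<in>set [lo..<hi]. i + N \<le> m" using L1N mL2 L12 by (auto simp: hi_def)
  have kT: "ker X m (wedges X m (map (Sop X N R m) [lo..<hi])) = SumE ?E {lo..<hi}"
    using wedges_ker[OF fin red _ _ pos] lohi by simp
  have key: "SumE ?E {lo..<hi} \<inter> ?TJ0 = ?TJ1"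
  proof
    show "?TJ1 \<subseteq> SumE ?E {lo..<hi} \<inter> ?TJ0"
    proof
      fix v assume v: "v \<in> ?TJ1"
      have aI: "a \<in> {lo..<hi}" using L12 mL2 by (simp add: a_def lo_def hi_def)
      have va: "v \<in> ?E a" using v L1N mL2 by (simp add: a_def)
      have "v \<in> SumE ?E {lo..<hi}"
        unfolding SumE_def
        by (intro CollectI exI[of _ "\<lambda>i. if i = a then v else 0"] conjI)
          (use aI va subsp_0[OF Eop_subsp[OF fin red]] pos in \<open>auto simp: sum.delta\<close>)
      moreover have "v \<in> ?TJ0" using v L01 by (auto simp: a_def)
      ultimately show "v \<in> SumE ?E {lo..<hi} \<inter> ?TJ0" by blast
    qed
    show "SumE ?E {lo..<hi} \<inter> ?TJ0 \<subseteq> ?TJ1"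
    proof
      fix v assume v: "v \<in> SumE ?E {lo..<hi} \<inter> ?TJ0"
      have vv: "v \<in> vecs X m" using v by blast
      have lowpart: "v \<in> ?E i" if i: "a \<le> i" "i < m - L0" for i
        using rel
      proof
        assume r: "L1 = L0 + 1 \<and> L2 = L0 + N"
        have ia: "i = a" using i r mL2 by (simp add: a_def)
        have I: "{lo..<hi} = {a + 2 - N..a}" using r mL2 N2 L0N by (auto simp: lo_def hi_def a_def)
        have e: "a + 1 = m - L0" using r mL2 L0N N2 by (simp add: a_def)
        have "m - L0 \<le> m - N" using L0N by simp
        then have x2: "v \<in> ?E (a + 1)" unfolding e using v by blast
        have c1: "a + 1 + N \<le> m" using e L0N mL2 r by linarith
        have c2: "N - 2 \<le> a" using mL2 r unfolding a_def by linarith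
        have x1: "v \<in> SumE ?E {a + 2 - N..a}" using v I by simp
        show "v \<in> ?E i" unfolding ia by (rule even_core[OF fin red sc ec N2 c1 c2 x1 x2])
      next
        assume r: "L1 = L0 + N - 1 \<and> L2 = L1 + 1"
        have I: "{lo..<hi} = {a}" using r mL2 by (auto simp: lo_def hi_def a_def)
        have x1: "v \<in> ?E a" using v I SumE_single[of ?E a] by simp
        have x2: "v \<in> ?E (a + (N - 1))" using v r mL2 L0N N2 by (auto simp: a_def)
        have all: "\<forall>k. k \<le> N - 1 \<longrightarrow> v \<in> ?E (a + k)"
          by (rule odd_core[OF fin red ec N2 _ x1 x2]) (use r mL2 L0N N2 in \<open>simp add: a_def\<close>)
        have "i - a \<le> N - 1" using i r mL2 by (simp add: a_def)
        then show "v \<in> ?E i" using all i(1) by (metis le_add_diff_inverse)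
      qed
      have "\<forall>i. a \<le> i \<and> i \<le> m - N \<longrightarrow> v \<in> ?E i"
      proof (intro allI impI)
        fix i assume i: "a \<le> i \<and> i \<le> m - N"
        show "v \<in> ?E i"
        proof (cases "i < m - L0")
          case True then show ?thesis using lowpart i by blast
        next
          case False then show ?thesis using v i by auto
        qed
      qed
      then show "v \<in> ?TJ1" using vv by blast
    qed
  qed
  have "vee X m (wedges X m (map (Sop X N R m) [lo..<hi])) (F2 X N R (n - 1) m) = theta_inv X m ?TJ1"
    unfolding vee_def kT kF key ..
  then show ?thesis using F2n by (simp add: lo_def hi_def L1_def L2_def)
qed


end
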